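(* For multi-indices $\alpha,\beta$ there is $C=C(\alpha,\beta,\iota,\Omega)$ such that for every smooth function $f$ on $\Omega$ and $k=1,2,3$, $$\Big|\partial^\alpha\bar\partial^\beta\big(\sigma^{-\iota}\partial_k(\sigma^{\iota+1}f)\big)-\sigma^{-\iota-|\alpha|}\partial_k\big(\sigma^{\iota+|\alpha|+1}\partial^\alpha\bar\partial^\beta f\big)\Big|\le C\sum_{0\le j\le|\beta|-1}\Big(\sigma|\partial^{|\alpha|+1}\bar\partial^jf|+|\partial^{|\alpha|}\bar\partial^jf|\Big)+C|\alpha|\sum_{0\le j\le|\beta|+1}|\partial^{|\alpha|-1}\bar\partial^jf| .$$
   Context: $\iota>0$ is a fixed real number ($\iota=1/(\gamma-1)$, $\gamma>1$). $\underline A,\underline B>0$, $\Omega\subset\mathbb R^3$ is the open ball centered at $0$ of radius $\sqrt{\underline A/\underline B}$, $\sigma(y)=\underline A-\underline B|y|^2$. $\partial_k=\partial/\partial y_k$; $\bar\partial_i=\epsilon^{ijk}y_j\partial_k$; $\partial^\alpha,\bar\partial^\beta$ multi-index powers; for integers $a,b\ge0$, $|\partial^a\bar\partial^bf|=\sum_{|\alpha'|=a,|\beta'|=b}|\partial^{\alpha'}\bar\partial^{\beta'}f|$ (empty sums are $0$). *)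

theory Defs
  imports "HOL-Analysis.Analysis"
begin

definition pd :: "3 \<Rightarrow> (real^3 \<Rightarrow> real) \<Rightarrow> real^3 \<Rightarrow> real" where
  "pd k f y = deriv (\<lambda>t. f (y + t *\<^sub>R axis k 1)) 0"

definition levi :: "3 \<Rightarrow> 3 \<Rightarrow> 3 \<Rightarrow> real" where
  "levi i j k =
    (if (i,j,k) \<in> {(1,2,3),(2,3,1),(3,1,2)} then 1
     else if (i,j,k) \<in> {(1,3,2),(3,2,1),(2,1,3)} then -1 else 0)"

definition rd :: "3 \<Rightarrow> (real^3 \<Rightarrow> real) \<Rightarrow> real^3 \<Rightarrow> real" where
  "rd i f y = (\<Sum>j\<in>UNIV. \<Sum>k\<in>UNIV. levi i j k * y$j * pd k f y)"

fun pds :: "3 list \<Rightarrow> (real^3 \<Rightarrow> real) \<Rightarrow> real^3 \<Rightarrow> real" where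
  "pds [] f = f"
| "pds (k # ks) f = pd k (pds ks f)"

definition smooth_on :: "(real^3) set \<Rightarrow> (real^3 \<Rightarrow> real) \<Rightarrow> bool" where
  "smooth_on U f \<longleftrightarrow> (\<forall>ks. pds ks f differentiable_on U)"

definition mlen :: "(3 \<Rightarrow> nat) \<Rightarrow> nat" where
  "mlen \<alpha> = (\<Sum>i\<in>UNIV. \<alpha> i)"

definition dpow :: "(3 \<Rightarrow> nat) \<Rightarrow> (real^3 \<Rightarrow> real) \<Rightarrow> real^3 \<Rightarrow> real" where
  "dpow \<alpha> f = (pd 1 ^^ \<alpha> 1) ((pd 2 ^^ \<alpha> 2) ((pd 3 ^^ \<alpha> 3) f))"

definition rpow :: "(3 \<Rightarrow> nat) \<Rightarrow> (real^3 \<Rightarrow> real) \<Rightarrow> real^3 \<Rightarrow> real" where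
  "rpow \<beta> f = (rd 1 ^^ \<beta> 1) ((rd 2 ^^ \<beta> 2) ((rd 3 ^^ \<beta> 3) f))"

text \<open>|\<partial>^a \<bar>\<partial>^b f|(y): sum over all multi-indices of the given lengths\<close>
definition absD :: "nat \<Rightarrow> nat \<Rightarrow> (real^3 \<Rightarrow> real) \<Rightarrow> real^3 \<Rightarrow> real" where
  "absD a b f y = (\<Sum>\<alpha>\<in>{\<alpha>. mlen \<alpha> = a}. \<Sum>\<beta>\<in>{\<beta>. mlen \<beta> = b}. \<bar>dpow \<alpha> (rpow \<beta> f) y\<bar>)"

definition sig :: "real \<Rightarrow> real \<Rightarrow> real^3 \<Rightarrow> real" where
  "sig A B y = A - B * (norm y)^2"

end

theory Submission
  imports Defs "HOL-Library.FuncSet"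
begin

abbreviation ax :: "3 \<Rightarrow> real^3" where "ax m \<equiv> axis m 1"

lemma line_deriv0:
  assumes "(g has_derivative D) (at p)" and "p = q + s *\<^sub>R v"
  shows "((\<lambda>t. g (q + t *\<^sub>R v)) has_real_derivative D v) (at s)"
proof -
  have l: "((\<lambda>t. q + t *\<^sub>R v) has_derivative (\<lambda>t. t *\<^sub>R v)) (at s)"
    by (auto intro!: derivative_eq_intros)
  have "((g \<circ> (\<lambda>t. q + t *\<^sub>R v)) has_derivative (D \<circ> (\<lambda>t. t *\<^sub>R v))) (at s)"
    using diff_chain_at[OF l] assms by simp
  moreover have "D \<circ> (\<lambda>t. t *\<^sub>R v) = (\<lambda>t. D v * t)"
    using has_derivative_linear[OF assms(1)] by (auto simp: linear_scale o_def)
  ultimately show ?thesis by (simp add: has_field_derivative_def o_def)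
qed

lemma pd_eq: assumes "(g has_derivative D) (at p)" shows "pd m g p = D (ax m)"
proof -
  have "((\<lambda>t. g (p + t *\<^sub>R ax m)) has_real_derivative D (ax m)) (at 0)"
    by (rule line_deriv0[OF assms]) simp
  thus ?thesis unfolding pd_def by (rule DERIV_imp_deriv)
qed

lemma line_deriv:
  assumes "g differentiable (at (q + s *\<^sub>R ax m))"
  shows "((\<lambda>t. g (q + t *\<^sub>R ax m)) has_real_derivative pd m g (q + s *\<^sub>R ax m)) (at s)"
proof -
  obtain D where D: "(g has_derivative D) (at (q + s *\<^sub>R ax m))"
    using assms unfolding differentiable_def by blast
  show ?thesis using line_deriv0[OF D refl] pd_eq[OF D] by simp
qed

lemma pd_deriv:
  assumes "g differentiable (at p)"
  shows "((\<lambda>t. g (p + t *\<^sub>R ax m)) has_real_derivative pd m g p) (at 0)"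
  using line_deriv[of g p 0 m] assms by simp

lemma pd_add: "g differentiable (at p) \<Longrightarrow> h differentiable (at p) \<Longrightarrow>
   pd m (\<lambda>z. g z + h z) p = pd m g p + pd m h p"
  unfolding pd_def[of m "\<lambda>z. g z + h z"]
  by (rule DERIV_imp_deriv, rule DERIV_add[OF pd_deriv pd_deriv])

lemma pd_mult: "g differentiable (at p) \<Longrightarrow> h differentiable (at p) \<Longrightarrow>
   pd m (\<lambda>z. g z * h z) p = pd m g p * h p + g p * pd m h p"
  unfolding pd_def[of m "\<lambda>z. g z * h z"]
  by (rule DERIV_imp_deriv, rule DERIV_mult[OF pd_deriv pd_deriv, THEN DERIV_cong]) auto

lemma pd_const[simp]: "pd m (\<lambda>z. c) = (\<lambda>z. 0)"
  unfolding pd_def by (simp add: fun_eq_iff)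

lemma pd_coord[simp]: "pd m (\<lambda>z. z $ j) = (\<lambda>z. if m = j then 1 else 0)"
proof
  fix p
  have "((\<lambda>t. (p + t *\<^sub>R ax m) $ j) has_real_derivative (if m = j then 1 else 0)) (at 0)"
    by (auto simp: axis_def intro!: derivative_eq_intros)
  thus "pd m (\<lambda>z. z $ j) p = (if m = j then 1 else 0)"
    unfolding pd_def by (rule DERIV_imp_deriv)
qed

lemma pd_local:
  assumes "open U" "p \<in> U" "\<And>z. z \<in> U \<Longrightarrow> g z = h z"
  shows "pd m g p = pd m h p"
proof -
  obtain e where e: "e > 0" "ball p e \<subseteq> U" using assms(1,2) open_contains_ball by blast
  have "eventually (\<lambda>t. g (p + t *\<^sub>R ax m) = h (p + t *\<^sub>R ax m)) (nhds 0)"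
    unfolding eventually_nhds_metric
  proof (intro exI[of _ e] conjI allI impI)
    fix t :: real assume "dist t 0 < e"
    hence "p + t *\<^sub>R ax m \<in> ball p e" by (simp add: dist_norm)
    thus "g (p + t *\<^sub>R ax m) = h (p + t *\<^sub>R ax m)" using e assms(3) by blast
  qed (use e in auto)
  thus ?thesis unfolding pd_def by (rule deriv_cong_ev) simp
qed

lemma pds_append: "pds (ks @ ls) g = pds ks (pds ls g)"
  by (induction ks) auto

lemma sm_diff_at: "open U \<Longrightarrow> smooth_on U g \<Longrightarrow> p \<in> U \<Longrightarrow> g differentiable (at p)"
  unfolding smooth_on_def using differentiable_on_eq_differentiable_at
  by (metis pds.simps(1))

lemma sm_pd: "smooth_on U g \<Longrightarrow> smooth_on U (pd m g)"
  unfolding smooth_on_def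
proof
  fix ks assume "\<forall>ks. pds ks g differentiable_on U"
  hence "pds (ks @ [m]) g differentiable_on U" by blast
  thus "pds ks (pd m g) differentiable_on U" by (simp add: pds_append)
qed

lemma pds_local: "open U \<Longrightarrow> (\<And>z. z \<in> U \<Longrightarrow> g z = h z) \<Longrightarrow> z \<in> U \<Longrightarrow> pds ks g z = pds ks h z"
proof (induction ks arbitrary: z)
  case (Cons k ks) thus ?case using pd_local[of U z "pds ks g" "pds ks h" k] by simp
qed simp

lemma diffon_local: assumes "open U" "g differentiable_on U" "\<And>z. z \<in> U \<Longrightarrow> g z = h z"
  shows "h differentiable_on U"
  unfolding differentiable_on_eq_differentiable_at[OF assms(1)]
proof
  fix x assume x: "x \<in> U"
  have "g differentiable at x" using assms(1,2) x differentiable_on_eq_differentiable_at by blast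
  then obtain D where "(g has_derivative D) (at x)" unfolding differentiable_def by blast
  hence "(h has_derivative D) (at x)" by (rule has_derivative_transform_within_open[OF _ assms(1) x assms(3)])
  thus "h differentiable at x" unfolding differentiable_def by blast
qed

lemma sm_local: assumes "open U" "smooth_on U g" "\<And>z. z \<in> U \<Longrightarrow> g z = h z" shows "smooth_on U h"
  unfolding smooth_on_def
proof
  fix ks
  have "pds ks g differentiable_on U" using assms(2) unfolding smooth_on_def by blast
  thus "pds ks h differentiable_on U"
    by (rule diffon_local[OF assms(1)]) (rule pds_local[OF assms(1) assms(3)])
qed

lemma pds_add_gen:
  assumes "open U" "\<And>ks'. length ks' < length ks \<Longrightarrow> pds ks' F differentiable_on U \<and> pds ks' H differentiable_on U"
    "z \<in> U"
  shows "pds ks (\<lambda>z. F z + H z) z = pds ks F z + pds ks H z"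
  using assms(2,3)
proof (induction ks arbitrary: z)
  case (Cons k ks)
  have a: "pds ks F differentiable_on U" "pds ks H differentiable_on U" using Cons.prems(1)[of ks] by auto
  have a2: "pds ks F differentiable at z" "pds ks H differentiable at z"
    using a Cons.prems(2) assms(1) differentiable_on_eq_differentiable_at by blast+
  have IH: "pds ks (\<lambda>z. F z + H z) x = pds ks F x + pds ks H x" if "x \<in> U" for x
    using Cons.IH Cons.prems(1) that by simp
  have "pds (k # ks) (\<lambda>z. F z + H z) z = pd k (\<lambda>z. pds ks F z + pds ks H z) z"
    using pd_local[OF assms(1) Cons.prems(2) IH] by simp
  also have "\<dots> = pds (k # ks) F z + pds (k # ks) H z"
    using pd_add[OF a2] by simp
  finally show ?case .
qed simp

lemma sm_add: assumes "open U" "smooth_on U g" "smooth_on U h" shows "smooth_on U (\<lambda>z. g z + h z)"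
  unfolding smooth_on_def
proof
  fix ks
  have d: "(\<lambda>z. pds ks g z + pds ks h z) differentiable_on U"
    using assms unfolding smooth_on_def by (intro differentiable_on_add) auto
  have "pds ks (\<lambda>z. g z + h z) z = pds ks g z + pds ks h z" if "z \<in> U" for z
    by (rule pds_add_gen[OF assms(1) _ that]) (use assms(2,3) in \<open>auto simp: smooth_on_def\<close>)
  thus "pds ks (\<lambda>z. g z + h z) differentiable_on U"
    using diffon_local[OF assms(1) d] by simp
qed

lemma pds_const: "\<exists>c'. pds ks (\<lambda>z. c) = (\<lambda>z. c')"
  by (induction ks) auto

lemma sm_const: "smooth_on U (\<lambda>z. c)"
  unfolding smooth_on_def
proof
  fix ks
  obtain c' where "pds ks (\<lambda>z. c) = (\<lambda>z. c')" using pds_const by blast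
  thus "pds ks (\<lambda>z. c) differentiable_on U" by simp
qed

lemma pds_coord: "(\<exists>c'. pds ks (\<lambda>z. z $ j) = (\<lambda>z. c')) \<or> pds ks (\<lambda>z. z $ j) = (\<lambda>z. z $ j)"
proof (induction ks)
  case (Cons k ks) thus ?case
  proof
    assume "\<exists>c'. pds ks (\<lambda>z. z $ j) = (\<lambda>z. c')" thus ?case by auto
  next
    assume "pds ks (\<lambda>z. z $ j) = (\<lambda>z. z $ j)"
    thus ?case by (cases "k = j") auto
  qed
qed simp

lemma sm_coord: "smooth_on U (\<lambda>z. z $ j)"
  unfolding smooth_on_def
proof
  fix ks
  have d: "(\<lambda>z::real^3. z $ j) differentiable_on U"
    by (rule bounded_linear_imp_differentiable_on) (rule bounded_linear_vec_nth)
  show "pds ks (\<lambda>z. z $ j) differentiable_on U"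
    using pds_coord[of ks j]
  proof
    assume "\<exists>c'. pds ks (\<lambda>z. z $ j) = (\<lambda>z. c')"
    then obtain c' where "pds ks (\<lambda>z. z $ j) = (\<lambda>z. c')" by blast
    thus ?thesis by simp
  qed (use d in simp)
qed

lemma sm_mult_aux:
  assumes U: "open U"
  shows "length ks \<le> n \<Longrightarrow> smooth_on U g \<Longrightarrow> smooth_on U h \<Longrightarrow> pds ks (\<lambda>z. g z * h z) differentiable_on U"
proof (induction n arbitrary: ks g h)
  case 0
  hence "ks = []" by simp
  thus ?case using 0 unfolding smooth_on_def by (metis differentiable_on_mult pds.simps(1))
next
  case (Suc n)
  show ?case
  proof (cases ks rule: rev_exhaust)
    case Nil thus ?thesis using Suc.prems unfolding smooth_on_def
      by (metis differentiable_on_mult pds.simps(1))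
  next
    case (snoc ks0 m)
    have l: "length ks0 \<le> n" using Suc.prems snoc by simp
    have sg: "smooth_on U (pd m g)" "smooth_on U (pd m h)" using Suc.prems sm_pd by auto
    have e1: "pd m (\<lambda>z. g z * h z) z = pd m g z * h z + g z * pd m h z" if "z \<in> U" for z
      using pd_mult sm_diff_at[OF U] Suc.prems that by blast
    have e2: "pds ks0 (pd m (\<lambda>z. g z * h z)) z = pds ks0 (\<lambda>z. pd m g z * h z + g z * pd m h z) z"
      if "z \<in> U" for z using pds_local[OF U e1 that] .
    have e3: "pds ks0 (\<lambda>z. pd m g z * h z + g z * pd m h z) z
       = pds ks0 (\<lambda>z. pd m g z * h z) z + pds ks0 (\<lambda>z. g z * pd m h z) z" if "z \<in> U" for z
      by (rule pds_add_gen[OF U _ that]) (use Suc.IH l sg Suc.prems in auto)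
    have d: "(\<lambda>z. pds ks0 (\<lambda>z. pd m g z * h z) z + pds ks0 (\<lambda>z. g z * pd m h z) z) differentiable_on U"
      using Suc.IH[OF l sg(1) Suc.prems(3)] Suc.IH[OF l Suc.prems(2) sg(2)]
      by (auto intro!: differentiable_on_add)
    show ?thesis unfolding snoc pds_append using diffon_local[OF U d] e2 e3 by simp
  qed
qed

lemma sm_mult: "open U \<Longrightarrow> smooth_on U g \<Longrightarrow> smooth_on U h \<Longrightarrow> smooth_on U (\<lambda>z. g z * h z)"
  unfolding smooth_on_def[of U "\<lambda>z. g z * h z"] using sm_mult_aux by blast

lemma sm_cmult: "open U \<Longrightarrow> smooth_on U g \<Longrightarrow> smooth_on U (\<lambda>z. c * g z)"
  using sm_mult[of U "\<lambda>z. c" g] sm_const by auto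

lemma sm_diff: "open U \<Longrightarrow> smooth_on U g \<Longrightarrow> smooth_on U h \<Longrightarrow> smooth_on U (\<lambda>z. g z - h z)"
  using sm_add[of U g "\<lambda>z. (-1) * h z"] sm_cmult[of U h "-1"] by simp

lemma sm_sum: assumes U: "open U" shows "finite S \<Longrightarrow> (\<And>x. x \<in> S \<Longrightarrow> smooth_on U (F x)) \<Longrightarrow> smooth_on U (\<lambda>z. \<Sum>x\<in>S. F x z)"
proof (induction S rule: finite_induct)
  case empty thus ?case using sm_const[of U 0] by simp
next
  case (insert a S)
  have "smooth_on U (\<lambda>z. F a z + (\<Sum>x\<in>S. F x z))"
    by (rule sm_add[OF U]) (use insert in auto)
  thus ?case using insert by simp
qed

lemma rd_fun: "rd i g = (\<lambda>y. \<Sum>j\<in>UNIV. \<Sum>k\<in>UNIV. levi i j k * y$j * pd k g y)"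
  unfolding rd_def by (rule ext) simp

lemma sm_rd: assumes U: "open U" and g: "smooth_on U g" shows "smooth_on U (rd i g)"
proof -
  have "smooth_on U (\<lambda>y. levi i j k * y$j * pd k g y)" for j k
    by (rule sm_mult[OF U sm_cmult[OF U sm_coord] sm_pd[OF g]])
  hence "smooth_on U (\<lambda>y. \<Sum>k\<in>UNIV. levi i j k * y$j * pd k g y)" for j
    by (rule sm_sum[OF U finite_class.finite_UNIV])
  hence "smooth_on U (\<lambda>y. \<Sum>j\<in>UNIV. \<Sum>k\<in>UNIV. levi i j k * y$j * pd k g y)"
    by (rule sm_sum[OF U finite_class.finite_UNIV])
  thus ?thesis unfolding rd_fun .
qed

lemma sig_fun: "sig A B = (\<lambda>y. A - B * (\<Sum>j\<in>UNIV. y$j * y$j))"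
  by (rule ext) (simp add: sig_def power2_norm_eq_inner inner_vec_def)

lemma sm_sig: assumes U: "open U" shows "smooth_on U (sig A B)"
proof -
  have "smooth_on U (\<lambda>y. y$j * y$j)" for j by (rule sm_mult[OF U sm_coord sm_coord])
  hence "smooth_on U (\<lambda>y. \<Sum>j\<in>UNIV. y$j * y$j)" by (rule sm_sum[OF U finite_class.finite_UNIV])
  thus ?thesis unfolding sig_fun by (intro sm_diff[OF U] sm_const sm_cmult[OF U])
qed

lemma delta_mvt:
  assumes U: "open U" and g: "smooth_on U g" and h: "h > 0"
    and inU: "\<And>s t. 0 \<le> s \<Longrightarrow> s \<le> h \<Longrightarrow> 0 \<le> t \<Longrightarrow> t \<le> h \<Longrightarrow> p + s *\<^sub>R ax i + t *\<^sub>R ax j \<in> U"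
  shows "\<exists>q. dist q p \<le> 2*h \<and>
     g (p + h *\<^sub>R ax i + h *\<^sub>R ax j) - g (p + h *\<^sub>R ax i) - g (p + h *\<^sub>R ax j) + g p = h*h* pd j (pd i g) q"
proof -
  define \<phi> where "\<phi> s = g (p + h *\<^sub>R ax j + s *\<^sub>R ax i) - g (p + s *\<^sub>R ax i)" for s
  define \<phi>' where "\<phi>' s = pd i g (p + h *\<^sub>R ax j + s *\<^sub>R ax i) - pd i g (p + s *\<^sub>R ax i)" for s
  have "DERIV \<phi> s :> \<phi>' s" if "0 \<le> s" "s \<le> h" for s
  proof -
    have a: "p + h *\<^sub>R ax j + s *\<^sub>R ax i \<in> U" using inU[of s h] that h by (simp add: algebra_simps)
    have b: "p + s *\<^sub>R ax i \<in> U" using inU[of s 0] that h by simp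
    show ?thesis unfolding \<phi>_def[abs_def] \<phi>'_def
      by (intro DERIV_diff line_deriv sm_diff_at[OF U g]) (use a b in auto)
  qed
  then obtain s where s: "0 < s" "s < h" "\<phi> h - \<phi> 0 = (h - 0) * \<phi>' s"
    using MVT2[OF h, of \<phi> \<phi>'] by auto
  define \<psi> where "\<psi> t = pd i g (p + s *\<^sub>R ax i + t *\<^sub>R ax j)" for t
  have gi: "smooth_on U (pd i g)" by (rule sm_pd[OF g])
  have "DERIV \<psi> t :> pd j (pd i g) (p + s *\<^sub>R ax i + t *\<^sub>R ax j)" if "0 \<le> t" "t \<le> h" for t
    unfolding \<psi>_def
    by (intro line_deriv sm_diff_at[OF U gi]) (use inU[of s t] that s in auto)
  then obtain t where t: "0 < t" "t < h"
     "\<psi> h - \<psi> 0 = (h - 0) * pd j (pd i g) (p + s *\<^sub>R ax i + t *\<^sub>R ax j)"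
    using MVT2[OF h, of \<psi> "\<lambda>t. pd j (pd i g) (p + s *\<^sub>R ax i + t *\<^sub>R ax j)"] by auto
  have e1: "\<phi>' s = \<psi> h - \<psi> 0" unfolding \<phi>'_def \<psi>_def by (simp add: algebra_simps)
  have e2: "\<phi> h - \<phi> 0 = g (p + h *\<^sub>R ax i + h *\<^sub>R ax j) - g (p + h *\<^sub>R ax i) - g (p + h *\<^sub>R ax j) + g p"
    unfolding \<phi>_def by (simp add: algebra_simps)
  have "dist (p + s *\<^sub>R ax i + t *\<^sub>R ax j) p = norm (s *\<^sub>R ax i + t *\<^sub>R ax j)"
    by (simp add: dist_norm)
  also have "\<dots> \<le> norm (s *\<^sub>R ax i) + norm (t *\<^sub>R ax j)" by (rule norm_triangle_ineq)
  also have "\<dots> \<le> 2 * h" using s t by simp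
  finally show ?thesis using s(3) t(3) e1 e2 by (intro exI[of _ "p + s *\<^sub>R ax i + t *\<^sub>R ax j"]) auto
qed

lemma schwarz:
  assumes U: "open U" and g: "smooth_on U g" and p: "p \<in> U"
  shows "pd i (pd j g) p = pd j (pd i g) p"
proof -
  obtain e where e: "e > 0" "ball p e \<subseteq> U" using U p open_contains_ball by blast
  define d where "d = e / 4"
  define hh where "hh n = d / real (Suc n)" for n
  have hpos: "hh n > 0" for n using e unfolding hh_def d_def by simp
  have hle: "hh n \<le> d" for n unfolding hh_def using e d_def
    by (simp add: divide_le_eq)
  have inU: "p + s *\<^sub>R ax a + t *\<^sub>R ax b \<in> U" if "0 \<le> s" "s \<le> hh n" "0 \<le> t" "t \<le> hh n" for s t n a b
  proof -
    have "norm (s *\<^sub>R ax a + t *\<^sub>R ax b) \<le> norm (s *\<^sub>R ax a) + norm (t *\<^sub>R ax b)" by (rule norm_triangle_ineq)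
    also have "\<dots> \<le> 2 * d" using that hle[of n] by simp
    also have "\<dots> < e" using e d_def by simp
    finally have nn: "norm (s *\<^sub>R ax a + t *\<^sub>R ax b) < e" .
    have "p + s *\<^sub>R ax a + t *\<^sub>R ax b \<in> ball p e"
    proof -
      have "- (s *\<^sub>R ax a) - t *\<^sub>R ax b = - (s *\<^sub>R ax a + t *\<^sub>R ax b)" by simp
      hence "norm (- (s *\<^sub>R ax a) - t *\<^sub>R ax b) < e" using nn
        by (metis norm_minus_cancel)
      thus ?thesis by (simp add: dist_norm)
    qed
    thus ?thesis using e(2) by blast
  qed
  define D where "D a b n = g (p + hh n *\<^sub>R ax a + hh n *\<^sub>R ax b) - g (p + hh n *\<^sub>R ax a) - g (p + hh n *\<^sub>R ax b) + g p" for a b n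
  have Dsym: "D a b n = D b a n" for a b n unfolding D_def by (simp add: algebra_simps)
  have ex: "\<forall>n. \<exists>q. dist q p \<le> 2 * hh n \<and> D a b n = hh n * hh n * pd b (pd a g) q" for a b
  proof
    fix n show "\<exists>q. dist q p \<le> 2 * hh n \<and> D a b n = hh n * hh n * pd b (pd a g) q"
      unfolding D_def by (rule delta_mvt[OF U g hpos inU]) auto
  qed
  obtain q where q: "\<And>n. dist (q n) p \<le> 2 * hh n \<and> D i j n = hh n * hh n * pd j (pd i g) (q n)"
    using ex[of i j] by metis
  obtain q' where q': "\<And>n. dist (q' n) p \<le> 2 * hh n \<and> D j i n = hh n * hh n * pd i (pd j g) (q' n)"
    using ex[of j i] by metis
  have eq: "pd j (pd i g) (q n) = pd i (pd j g) (q' n)" for n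
    using q[of n] q'[of n] Dsym[of i j n] hpos[of n] by simp
  have h0: "(\<lambda>n. 2 * hh n) \<longlonglongrightarrow> 0"
    unfolding hh_def using tendsto_mult[OF tendsto_const LIMSEQ_inverse_real_of_nat, of "2*d"]
    by (simp add: divide_inverse mult.assoc)
  have lim: "(\<lambda>n. r n) \<longlonglongrightarrow> p" if "\<And>n. dist (r n) p \<le> 2 * hh n" for r
  proof -
    have "(\<lambda>n. dist (r n) p) \<longlonglongrightarrow> 0"
      by (rule Lim_null_comparison[OF _ h0]) (use that in simp)
    thus ?thesis using tendsto_dist_iff by blast
  qed
  have c1: "isCont (pd j (pd i g)) p"
    using differentiable_imp_continuous_within sm_diff_at[OF U sm_pd[OF sm_pd[OF g]] p] by blast
  have c2: "isCont (pd i (pd j g)) p"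
    using differentiable_imp_continuous_within sm_diff_at[OF U sm_pd[OF sm_pd[OF g]] p] by blast
  have l1: "(\<lambda>n. pd j (pd i g) (q n)) \<longlonglongrightarrow> pd j (pd i g) p"
    by (rule isCont_tendsto_compose[OF c1 lim]) (use q in blast)
  have l2: "(\<lambda>n. pd i (pd j g) (q' n)) \<longlonglongrightarrow> pd i (pd j g) p"
    by (rule isCont_tendsto_compose[OF c2 lim]) (use q' in blast)
  show ?thesis using LIMSEQ_unique[OF l1] l2 eq by simp
qed

lemma coord_diff[simp]: "(\<lambda>z::real^3. z$j) differentiable at p"
  by (rule bounded_linear_imp_differentiable) (rule bounded_linear_vec_nth)

lemma pd_cmult: "g differentiable (at p) \<Longrightarrow> pd m (\<lambda>z. c * g z) p = c * pd m g p"
  unfolding pd_def[of m "\<lambda>z. c * g z"]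
  by (rule DERIV_imp_deriv, rule DERIV_cmult[OF pd_deriv])

lemma pd_sum: "(\<And>x. x \<in> S \<Longrightarrow> F x differentiable (at p)) \<Longrightarrow>
   pd m (\<lambda>z. \<Sum>x\<in>S. F x z) p = (\<Sum>x\<in>S. pd m (F x) p)"
  unfolding pd_def[of m "\<lambda>z. \<Sum>x\<in>S. F x z"]
  by (rule DERIV_imp_deriv, rule DERIV_sum, rule pd_deriv) auto

lemma pd_coordmult: "g differentiable (at p) \<Longrightarrow>
   pd m (\<lambda>z. c * z$j * g z) p = c * ((if m = j then 1 else 0) * g p + p$j * pd m g p)"
proof -
  assume g: "g differentiable (at p)"
  have d: "(\<lambda>z::real^3. c * z$j) differentiable at p" by (intro differentiable_mult) auto
  have "pd m (\<lambda>z. c * z$j * g z) p = pd m (\<lambda>z. c * z$j) p * g p + c * p$j * pd m g p"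
    by (rule pd_mult[OF d g])
  also have "pd m (\<lambda>z. c * z$j) p = c * (if m = j then 1 else 0)"
    using pd_cmult[of "\<lambda>z. z$j" p m c] by simp
  finally show ?thesis by (simp add: algebra_simps)
qed

lemma levi_cases: "levi i j k = (if (i,j,k) = (1,2,3) \<or> (i,j,k) = (2,3,1) \<or> (i,j,k) = (3,1,2) then 1 else if (i,j,k) = (1,3,2) \<or> (i,j,k) = (3,2,1) \<or> (i,j,k) = (2,1,3) then -1 else 0)"
  by (simp add: levi_def)

lemma pd_rd_expand:
  assumes U: "open U" and g: "smooth_on U g" and p: "p \<in> U"
  shows "pd m (rd i g) p = (\<Sum>j\<in>UNIV. \<Sum>k\<in>UNIV. levi i j k * ((if m = j then 1 else 0) * pd k g p + p$j * pd k (pd m g) p))"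
proof -
  have dk: "pd k g differentiable at p" for k using sm_diff_at[OF U sm_pd[OF g] p] .
  have "pd m (rd i g) p = (\<Sum>j\<in>UNIV. pd m (\<lambda>z. \<Sum>k\<in>UNIV. levi i j k * z$j * pd k g z) p)"
    unfolding rd_fun by (rule pd_sum) (auto intro!: differentiable_sum differentiable_mult dk)
  also have "\<dots> = (\<Sum>j\<in>UNIV. \<Sum>k\<in>UNIV. pd m (\<lambda>z. levi i j k * z$j * pd k g z) p)"
    by (rule sum.cong[OF refl], rule pd_sum) (auto intro!: differentiable_mult dk)
  also have "\<dots> = (\<Sum>j\<in>UNIV. \<Sum>k\<in>UNIV. levi i j k * ((if m = j then 1 else 0) * pd k g p + p$j * pd m (pd k g) p))"
    by (intro sum.cong refl pd_coordmult dk)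
  also have "\<dots> = (\<Sum>j\<in>UNIV. \<Sum>k\<in>UNIV. levi i j k * ((if m = j then 1 else 0) * pd k g p + p$j * pd k (pd m g) p))"
    using schwarz[OF U g p] by simp
  finally show ?thesis .
qed

lemma comm_PR:
  assumes U: "open U" and g: "smooth_on U g" and p: "p \<in> U"
  shows "pd m (rd i g) p = rd i (pd m g) p + (\<Sum>k\<in>UNIV. levi i m k * pd k g p)"
  unfolding pd_rd_expand[OF assms] rd_def
  using exhaust_3[of m] by (auto simp: sum_3 algebra_simps)

lemma RR_alg:
  fixes X :: "3 \<Rightarrow> 3 \<Rightarrow> real" and q :: "real^3"
  assumes "X 2 1 = X 1 2" "X 3 1 = X 1 3" "X 3 2 = X 2 3"
  shows "(\<Sum>a\<in>UNIV. \<Sum>b\<in>UNIV. levi i a b * q$a * ((\<Sum>c\<in>UNIV. \<Sum>d\<in>UNIV. levi j c d * q$c * X b d) + (\<Sum>d\<in>UNIV. levi j b d * Y d)))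
   - (\<Sum>a\<in>UNIV. \<Sum>b\<in>UNIV. levi j a b * q$a * ((\<Sum>c\<in>UNIV. \<Sum>d\<in>UNIV. levi i c d * q$c * X b d) + (\<Sum>d\<in>UNIV. levi i b d * Y d)))
   = (\<Sum>l\<in>UNIV. - levi i j l * (\<Sum>a\<in>UNIV. \<Sum>d\<in>UNIV. levi l a d * q$a * Y d))"
  using exhaust_3[of i] exhaust_3[of j] assms
  by (auto simp: sum_3 levi_def algebra_simps)

lemma comm_RR:
  assumes U: "open U" and g: "smooth_on U g" and p: "p \<in> U"
  shows "rd i (rd j g) p = rd j (rd i g) p + (\<Sum>l\<in>UNIV. - levi i j l * rd l g p)"
proof -
  have e: "pd b (rd k g) p = (\<Sum>c\<in>UNIV. \<Sum>d\<in>UNIV. levi k c d * p$c * pd d (pd b g) p) + (\<Sum>d\<in>UNIV. levi k b d * pd d g p)" for b k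
    using comm_PR[OF assms, of b k] unfolding rd_def .
  have s: "pd a (pd b g) p = pd b (pd a g) p" for a b using schwarz[OF U g p] .
  show ?thesis
    using RR_alg[of "\<lambda>b d. pd d (pd b g) p" i p j "\<lambda>d. pd d g p"] s
    unfolding rd_def[of i "rd j g"] rd_def[of j "rd i g"] rd_def[of _ g] e
    by (simp add: algebra_simps)
qed

datatype op = P 3 | R 3

fun opf :: "op \<Rightarrow> (real^3 \<Rightarrow> real) \<Rightarrow> real^3 \<Rightarrow> real" where
  "opf (P m) = pd m" | "opf (R i) = rd i"

fun app :: "op list \<Rightarrow> (real^3 \<Rightarrow> real) \<Rightarrow> real^3 \<Rightarrow> real" where
  "app [] g = g" | "app (x # w) g = opf x (app w g)"

lemma app_append: "app (u @ v) g = app u (app v g)"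
  by (induction u) auto

lemma rd_local: "open U \<Longrightarrow> (\<And>z. z \<in> U \<Longrightarrow> g z = h z) \<Longrightarrow> p \<in> U \<Longrightarrow> rd i g p = rd i h p"
  unfolding rd_def using pd_local[of U p g h] by simp

lemma opf_local: "open U \<Longrightarrow> (\<And>z. z \<in> U \<Longrightarrow> g z = h z) \<Longrightarrow> p \<in> U \<Longrightarrow> opf x g p = opf x h p"
  by (cases x) (auto intro: pd_local rd_local)

lemma app_local: "open U \<Longrightarrow> (\<And>z. z \<in> U \<Longrightarrow> g z = h z) \<Longrightarrow> p \<in> U \<Longrightarrow> app w g p = app w h p"
proof (induction w arbitrary: p)
  case (Cons x w) thus ?case using opf_local[of U "app w g" "app w h" p x] by simp
qed simp

lemma sm_opf: "open U \<Longrightarrow> smooth_on U g \<Longrightarrow> smooth_on U (opf x g)"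
  by (cases x) (auto intro: sm_pd sm_rd)

lemma sm_app: "open U \<Longrightarrow> smooth_on U g \<Longrightarrow> smooth_on U (app w g)"
  by (induction w) (auto intro: sm_opf)

lemma rd_add: assumes "g differentiable at p" "h differentiable at p"
  shows "rd i (\<lambda>z. g z + h z) p = rd i g p + rd i h p"
  unfolding rd_def using pd_add[OF assms]
  by (simp add: sum.distrib[symmetric] algebra_simps)

lemma rd_cmult: assumes "g differentiable at p"
  shows "rd i (\<lambda>z. c * g z) p = c * rd i g p"
  unfolding rd_def using pd_cmult[OF assms]
  by (simp add: sum_distrib_left algebra_simps)

lemma opf_add: "g differentiable at p \<Longrightarrow> h differentiable at p \<Longrightarrow>
  opf x (\<lambda>z. g z + h z) p = opf x g p + opf x h p"
  by (cases x) (auto simp: pd_add rd_add)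

lemma opf_cmult: "g differentiable at p \<Longrightarrow> opf x (\<lambda>z. c * g z) p = c * opf x g p"
  by (cases x) (auto simp: pd_cmult rd_cmult)

lemma opf_zero: "opf x (\<lambda>z. 0) = (\<lambda>z. 0)"
  by (cases x) (auto simp: rd_def fun_eq_iff)

lemma app_add:
  assumes U: "open U" and g: "smooth_on U g" and h: "smooth_on U h"
  shows "p \<in> U \<Longrightarrow> app w (\<lambda>z. g z + h z) p = app w g p + app w h p"
proof (induction w arbitrary: p)
  case (Cons x w)
  have "app (x # w) (\<lambda>z. g z + h z) p = opf x (\<lambda>z. app w g z + app w h z) p"
    using opf_local[OF U Cons.IH Cons.prems] by simp
  also have "\<dots> = app (x # w) g p + app (x # w) h p"
    using opf_add sm_diff_at[OF U sm_app[OF U g] Cons.prems] sm_diff_at[OF U sm_app[OF U h] Cons.prems] by simp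
  finally show ?case .
qed simp

lemma app_cmult:
  assumes U: "open U" and g: "smooth_on U g"
  shows "p \<in> U \<Longrightarrow> app w (\<lambda>z. c * g z) p = c * app w g p"
proof (induction w arbitrary: p)
  case (Cons x w)
  have "app (x # w) (\<lambda>z. c * g z) p = opf x (\<lambda>z. c * app w g z) p"
    using opf_local[OF U Cons.IH Cons.prems] by simp
  also have "\<dots> = c * app (x # w) g p"
    using opf_cmult sm_diff_at[OF U sm_app[OF U g] Cons.prems] by simp
  finally show ?case .
qed simp

lemma app_zero: "app w (\<lambda>z. 0) = (\<lambda>z. 0)"
  by (induction w) (auto simp: opf_zero)

fun evw :: "(real \<times> op list) list \<Rightarrow> (real^3 \<Rightarrow> real) \<Rightarrow> real^3 \<Rightarrow> real" where
  "evw [] g = (\<lambda>z. 0)"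
| "evw ((c, w) # L) g = (\<lambda>z. c * app w g z + evw L g z)"

lemma sm_evw: "open U \<Longrightarrow> smooth_on U g \<Longrightarrow> smooth_on U (evw L g)"
  by (induction L g rule: evw.induct) (auto intro!: sm_add sm_cmult sm_app sm_const)

definition pre :: "op list \<Rightarrow> (real \<times> op list) list \<Rightarrow> (real \<times> op list) list" where
  "pre u L = map (\<lambda>(c, w). (c, u @ w)) L"

definition suf :: "op list \<Rightarrow> (real \<times> op list) list \<Rightarrow> (real \<times> op list) list" where
  "suf s L = map (\<lambda>(c, w). (c, w @ s)) L"

definition scl :: "real \<Rightarrow> (real \<times> op list) list \<Rightarrow> (real \<times> op list) list" where
  "scl d L = map (\<lambda>(c, w). (d * c, w)) L"

lemma evw_suf: "evw (suf s L) g = evw L (app s g)"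
  by (induction L g rule: evw.induct) (auto simp: suf_def app_append)

lemma evw_scl: "evw (scl d L) g z = d * evw L g z"
  by (induction L g rule: evw.induct) (auto simp: scl_def algebra_simps)

lemma evw_append: "evw (L1 @ L2) g z = evw L1 g z + evw L2 g z"
  by (induction L1 g rule: evw.induct) auto

lemma app_evw:
  assumes U: "open U" and g: "smooth_on U g"
  shows "p \<in> U \<Longrightarrow> app u (evw L g) p = evw (pre u L) g p"
proof (induction L arbitrary: p)
  case Nil thus ?case by (simp add: app_zero pre_def)
next
  case (Cons a L)
  obtain c w where a: "a = (c, w)" by fastforce
  have s1: "smooth_on U (\<lambda>z. c * app w g z)" by (rule sm_cmult[OF U sm_app[OF U g]])
  have "app u (evw (a # L) g) p = app u (\<lambda>z. c * app w g z) p + app u (evw L g) p"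
    unfolding a using app_add[OF U s1 sm_evw[OF U g] Cons.prems] by simp
  also have "\<dots> = c * app (u @ w) g p + evw (pre u L) g p"
    using app_cmult[OF U sm_app[OF U g] Cons.prems] Cons.IH[OF Cons.prems] by (simp add: app_append)
  finally show ?case by (simp add: a pre_def)
qed

fun isP :: "op \<Rightarrow> bool" where "isP (P _) = True" | "isP (R _) = False"

definition nP :: "op list \<Rightarrow> nat" where "nP w = length (filter isP w)"
definition nR :: "op list \<Rightarrow> nat" where "nR w = length (filter (\<lambda>x. \<not> isP x) w)"
definition cP :: "op list \<Rightarrow> 3 \<Rightarrow> nat" where "cP w = (\<lambda>m. length (filter (\<lambda>x. x = P m) w))"
definition cR :: "op list \<Rightarrow> 3 \<Rightarrow> nat" where "cR w = (\<lambda>m. length (filter (\<lambda>x. x = R m) w))"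

definition Pw :: "(3 \<Rightarrow> nat) \<Rightarrow> op list" where
  "Pw a = replicate (a 1) (P 1) @ replicate (a 2) (P 2) @ replicate (a 3) (P 3)"
definition Rw :: "(3 \<Rightarrow> nat) \<Rightarrow> op list" where
  "Rw a = replicate (a 1) (R 1) @ replicate (a 2) (R 2) @ replicate (a 3) (R 3)"
definition cw :: "(3 \<Rightarrow> nat) \<Rightarrow> (3 \<Rightarrow> nat) \<Rightarrow> op list" where "cw a b = Pw a @ Rw b"

lemma app_rep: "app (replicate n x) g = (opf x ^^ n) g"
  by (induction n) auto

lemma app_Pw: "app (Pw a) g = dpow a g"
  by (simp add: Pw_def app_append app_rep dpow_def)
lemma app_Rw: "app (Rw a) g = rpow a g"
  by (simp add: Rw_def app_append app_rep rpow_def)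
lemma app_cw: "app (cw a b) g = dpow a (rpow b g)"
  by (simp add: cw_def app_append app_Pw app_Rw)

lemma mlen3: "mlen a = a 1 + a 2 + a 3" by (simp add: mlen_def sum_3)

lemma len_filter_rep: "length (filter f (replicate n x)) = (if f x then n else 0)"
  by (induction n) auto

lemma counts_simps[simp]:
  "nP [] = 0" "nR [] = 0" "cP [] = (\<lambda>m. 0)" "cR [] = (\<lambda>m. 0)"
  "nP (x # w) = (if isP x then Suc (nP w) else nP w)"
  "nR (x # w) = (if isP x then nR w else Suc (nR w))"
  "nP (u @ v) = nP u + nP v" "nR (u @ v) = nR u + nR v"
  "cP (u @ v) = (\<lambda>m. cP u m + cP v m)" "cR (u @ v) = (\<lambda>m. cR u m + cR v m)"
  by (auto simp: nP_def nR_def cP_def cR_def)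

lemma cP_Cons: "cP (x # w) = (\<lambda>m. (if x = P m then 1 else 0) + cP w m)"
  by (auto simp: cP_def)
lemma cR_Cons: "cR (x # w) = (\<lambda>m. (if x = R m then 1 else 0) + cR w m)"
  by (auto simp: cR_def)

lemma len_nPR: "length w = nP w + nR w"
  by (induction w) auto

lemma mlen_cP: "mlen (cP w) = nP w"
proof (induction w)
  case Nil thus ?case by (simp add: mlen_def)
next
  case (Cons x w) thus ?case
    using exhaust_3 by (cases x) (auto simp: mlen3 cP_Cons)
qed

lemma mlen_cR: "mlen (cR w) = nR w"
proof (induction w)
  case Nil thus ?case by (simp add: mlen_def)
next
  case (Cons x w) thus ?case
    using exhaust_3 by (cases x) (auto simp: mlen3 cR_Cons)
qed

lemma cw_counts[simp]: "nP (cw a b) = mlen a" "nR (cw a b) = mlen b" "cP (cw a b) = a" "cR (cw a b) = b"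
  "length (cw a b) = mlen a + mlen b"
proof -
  show "nP (cw a b) = mlen a" "nR (cw a b) = mlen b"
    by (auto simp: cw_def Pw_def Rw_def nP_def nR_def len_filter_rep mlen3)
  show "cP (cw a b) = a" "cR (cw a b) = b"
    using exhaust_3 by (auto simp: fun_eq_iff cw_def Pw_def Rw_def cP_def cR_def len_filter_rep)
  thus "length (cw a b) = mlen a + mlen b"
    using \<open>nP (cw a b) = mlen a\<close> \<open>nR (cw a b) = mlen b\<close> len_nPR by metis
qed

lemma evw_map3: "evw (map (\<lambda>k. (c k, w k)) [1,2,3::3]) g z = (\<Sum>k\<in>UNIV. c k * app (w k) g z)"
  by (simp add: sum_3)

lemma RP:
  assumes U: "open U"
  shows "\<forall>x\<in>set u. isP x \<Longrightarrow> \<exists>K. (\<forall>(c,v)\<in>set K. (\<forall>x\<in>set v. isP x) \<and> length v = length u) \<and>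
     (\<forall>G. smooth_on U G \<longrightarrow> (\<forall>z\<in>U. rd i (app u G) z = app u (rd i G) z + evw K G z))"
proof (induction u)
  case Nil thus ?case by (intro exI[of _ "[]"]) auto
next
  case (Cons x u0)
  obtain m where x: "x = P m" using Cons.prems by (cases x) auto
  obtain K0 where K0: "\<forall>(c,v)\<in>set K0. (\<forall>x\<in>set v. isP x) \<and> length v = length u0"
    "\<And>G z. smooth_on U G \<Longrightarrow> z \<in> U \<Longrightarrow> rd i (app u0 G) z = app u0 (rd i G) z + evw K0 G z"
    using Cons by auto
  define K where "K = pre [P m] K0 @ scl (-1) (map (\<lambda>k. (levi i m k, P k # u0)) [1,2,3::3])"
  have K1: "\<forall>(c,v)\<in>set K. (\<forall>x\<in>set v. isP x) \<and> length v = length (x # u0)"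
      using K0(1) Cons.prems unfolding K_def pre_def scl_def by (fastforce simp: x)
  show ?case
  proof (intro exI[of _ K] conjI[OF K1] allI impI ballI)
    fix G z assume G: "smooth_on U G" and z: "z \<in> U"
    have Y: "smooth_on U (app u0 G)" by (rule sm_app[OF U G])
    have "rd i (pd m (app u0 G)) z = pd m (rd i (app u0 G)) z - (\<Sum>k\<in>UNIV. levi i m k * pd k (app u0 G) z)"
      using comm_PR[OF U Y z, of m i] by simp
    also have "pd m (rd i (app u0 G)) z = app [P m] (\<lambda>z. app u0 (rd i G) z + evw K0 G z) z"
      using app_local[OF U K0(2)[OF G] z, where w="[P m]"] by simp
    also have "\<dots> = app [P m] (app u0 (rd i G)) z + app [P m] (evw K0 G) z"
      by (rule app_add[OF U sm_app[OF U sm_rd[OF U G]] sm_evw[OF U G] z])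
    also have "\<dots> = app (x # u0) (rd i G) z + evw (pre [P m] K0) G z"
      using app_evw[OF U G z, of "[P m]" K0] by (simp add: x)
    also have "(\<Sum>k\<in>UNIV. levi i m k * pd k (app u0 G) z) = evw (map (\<lambda>k. (levi i m k, P k # u0)) [1,2,3::3]) G z"
      by (simp add: sum_3 algebra_simps)
    finally show "rd i (app (x # u0) G) z = app (x # u0) (rd i G) z + evw K G z"
      unfolding K_def by (simp add: x evw_append evw_scl)
  qed
qed

lemma RRit:
  assumes U: "open U"
  shows "\<exists>M. (\<forall>(c,v)\<in>set M. (\<forall>x\<in>set v. \<not> isP x) \<and> length v = n) \<and>
     (\<forall>G. smooth_on U G \<longrightarrow> (\<forall>z\<in>U. rd i (app (replicate n (R j)) G) z = app (replicate n (R j)) (rd i G) z + evw M G z))"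
proof (induction n)
  case 0 thus ?case by (intro exI[of _ "[]"]) auto
next
  case (Suc n)
  obtain M0 where M0: "\<forall>(c,v)\<in>set M0. (\<forall>x\<in>set v. \<not> isP x) \<and> length v = n"
    "\<And>G z. smooth_on U G \<Longrightarrow> z \<in> U \<Longrightarrow> rd i (app (replicate n (R j)) G) z = app (replicate n (R j)) (rd i G) z + evw M0 G z"
    using Suc by auto
  define M where "M = pre [R j] M0 @ map (\<lambda>l. (- levi i j l, R l # replicate n (R j))) [1,2,3::3]"
  have M1: "\<forall>(c,v)\<in>set M. (\<forall>x\<in>set v. \<not> isP x) \<and> length v = Suc n"
      using M0(1) unfolding M_def pre_def by fastforce
  show ?case
  proof (intro exI[of _ M] conjI[OF M1] allI impI ballI)
    fix G z assume G: "smooth_on U G" and z: "z \<in> U"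
    define Y where "Y = app (replicate n (R j)) G"
    have Y: "smooth_on U Y" unfolding Y_def by (rule sm_app[OF U G])
    have "rd i (app (replicate (Suc n) (R j)) G) z = rd i (rd j Y) z" by (simp add: Y_def)
    also have "\<dots> = rd j (rd i Y) z + (\<Sum>l\<in>UNIV. - levi i j l * rd l Y z)"
      by (rule comm_RR[OF U Y z])
    also have "rd j (rd i Y) z = app [R j] (\<lambda>z. app (replicate n (R j)) (rd i G) z + evw M0 G z) z"
      using app_local[OF U M0(2)[OF G] z, where w="[R j]"] by (simp add: Y_def)
    also have "\<dots> = app [R j] (app (replicate n (R j)) (rd i G)) z + app [R j] (evw M0 G) z"
      by (rule app_add[OF U sm_app[OF U sm_rd[OF U G]] sm_evw[OF U G] z])
    also have "\<dots> = app (replicate (Suc n) (R j)) (rd i G) z + evw (pre [R j] M0) G z"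
      using app_evw[OF U G z, of "[R j]" M0] by simp
    also have "(\<Sum>l\<in>UNIV. - levi i j l * rd l Y z) = evw (map (\<lambda>l. (- levi i j l, R l # replicate n (R j))) [1,2,3::3]) G z"
      by (simp add: sum_3 algebra_simps Y_def)
    finally show "rd i (app (replicate (Suc n) (R j)) G) z = app (replicate (Suc n) (R j)) (rd i G) z + evw M G z"
      unfolding M_def by (simp add: evw_append)
  qed
qed

lemma PPit:
  assumes U: "open U" and G: "smooth_on U G"
  shows "z \<in> U \<Longrightarrow> pd m (app (replicate n (P j)) G) z = app (replicate n (P j)) (pd m G) z"
proof (induction n arbitrary: z)
  case (Suc n)
  have Y: "smooth_on U (app (replicate n (P j)) G)" by (rule sm_app[OF U G])
  have "pd m (app (replicate (Suc n) (P j)) G) z = pd j (pd m (app (replicate n (P j)) G)) z"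
    using schwarz[OF U Y Suc.prems] by simp
  also have "\<dots> = pd j (app (replicate n (P j)) (pd m G)) z"
    by (rule pd_local[OF U Suc.prems Suc.IH])
  finally show ?case by simp
qed simp

lemma allP_counts: "\<forall>x\<in>set v. isP x \<Longrightarrow> nP v = length v \<and> nR v = 0"
  by (induction v) auto
lemma allR_counts: "\<forall>x\<in>set v. \<not> isP x \<Longrightarrow> nP v = 0 \<and> nR v = length v"
  by (induction v) auto
lemma Pw_allP: "\<forall>x\<in>set (Pw a). isP x" by (auto simp: Pw_def)
lemma Rw_allR: "\<forall>x\<in>set (Rw a). \<not> isP x" by (auto simp: Rw_def)
lemma len_Pw: "length (Pw a) = mlen a" by (simp add: Pw_def mlen3)
lemma len_Rw: "length (Rw a) = mlen a" by (simp add: Rw_def mlen3)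

lemma INS_P:
  assumes U: "open U" and G: "smooth_on U G" and z: "z \<in> U"
  shows "pd m (app (Pw a) G) z = app (Pw (a(m := a m + 1))) G z"
proof -
  consider "m = 1" | "m = 2" | "m = 3" using exhaust_3 by blast
  thus ?thesis
  proof cases
    case 1 thus ?thesis by (simp add: Pw_def app_append)
  next
    case 2
    define Y where "Y = app (replicate (a 2) (P 2) @ replicate (a 3) (P 3)) G"
    have Y: "smooth_on U Y" unfolding Y_def by (rule sm_app[OF U G])
    have "pd m (app (Pw a) G) z = pd 2 (app (replicate (a 1) (P 1)) Y) z"
      by (simp add: 2 Pw_def app_append Y_def)
    also have "\<dots> = app (replicate (a 1) (P 1)) (pd 2 Y) z" by (rule PPit[OF U Y z])
    also have "\<dots> = app (Pw (a(m := a m + 1))) G z"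
      by (simp add: 2 Pw_def app_append Y_def)
    finally show ?thesis .
  next
    case 3
    define Y2 where "Y2 = app (replicate (a 3) (P 3)) G"
    define Y1 where "Y1 = app (replicate (a 2) (P 2)) Y2"
    have Y2: "smooth_on U Y2" unfolding Y2_def by (rule sm_app[OF U G])
    have Y1: "smooth_on U Y1" unfolding Y1_def by (rule sm_app[OF U Y2])
    have "pd m (app (Pw a) G) z = pd 3 (app (replicate (a 1) (P 1)) Y1) z"
      by (simp add: 3 Pw_def app_append Y1_def Y2_def)
    also have "\<dots> = app (replicate (a 1) (P 1)) (pd 3 Y1) z" by (rule PPit[OF U Y1 z])
    also have "\<dots> = app (replicate (a 1) (P 1)) (app (replicate (a 2) (P 2)) (pd 3 Y2)) z"
      by (rule app_local[OF U _ z]) (unfold Y1_def, rule PPit[OF U Y2])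
    also have "\<dots> = app (Pw (a(m := a m + 1))) G z"
      by (simp add: 3 Pw_def app_append Y2_def)
    finally show ?thesis .
  qed
qed

lemma RRins:
  assumes U: "open U"
  shows "\<exists>M. (\<forall>(c,v)\<in>set M. (\<forall>x\<in>set v. \<not> isP x) \<and> length v = mlen b) \<and>
    (\<forall>G. smooth_on U G \<longrightarrow> (\<forall>z\<in>U. rd i (app (Rw b) G) z = app (Rw (b(i := b i + 1))) G z + evw M G z))"
proof -
  consider "i = 1" | "i = 2" | "i = 3" using exhaust_3 by blast
  thus ?thesis
  proof cases
    case 1 thus ?thesis by (intro exI[of _ "[]"]) (simp add: Rw_def app_append)
  next
    case 2
    obtain M1 where M1: "\<forall>(c,v)\<in>set M1. (\<forall>x\<in>set v. \<not> isP x) \<and> length v = b 1"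
      "\<And>G z. smooth_on U G \<Longrightarrow> z \<in> U \<Longrightarrow> rd 2 (app (replicate (b 1) (R 1)) G) z = app (replicate (b 1) (R 1)) (rd 2 G) z + evw M1 G z"
      using RRit[OF U, of "b 1" 2 1] by blast
    define s where "s = replicate (b 2) (R 2) @ replicate (b 3) (R 3)"
    have M1': "\<forall>(c,v)\<in>set (suf s M1). (\<forall>x\<in>set v. \<not> isP x) \<and> length v = mlen b"
        using M1(1) unfolding suf_def s_def by (fastforce simp: mlen3)
    show ?thesis
    proof (intro exI[of _ "suf s M1"] conjI[OF M1'] allI impI ballI)
      fix G z assume G: "smooth_on U G" and z: "z \<in> U"
      have Y: "smooth_on U (app s G)" by (rule sm_app[OF U G])
      have "rd i (app (Rw b) G) z = rd 2 (app (replicate (b 1) (R 1)) (app s G)) z"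
        by (simp add: 2 Rw_def app_append s_def)
      also have "\<dots> = app (replicate (b 1) (R 1)) (rd 2 (app s G)) z + evw M1 (app s G) z"
        by (rule M1(2)[OF Y z])
      also have "\<dots> = app (Rw (b(i := b i + 1))) G z + evw (suf s M1) G z"
        by (simp add: 2 Rw_def app_append s_def evw_suf)
      finally show "rd i (app (Rw b) G) z = app (Rw (b(i := b i + 1))) G z + evw (suf s M1) G z" .
    qed
  next
    case 3
    obtain M1 where M1: "\<forall>(c,v)\<in>set M1. (\<forall>x\<in>set v. \<not> isP x) \<and> length v = b 1"
      "\<And>G z. smooth_on U G \<Longrightarrow> z \<in> U \<Longrightarrow> rd 3 (app (replicate (b 1) (R 1)) G) z = app (replicate (b 1) (R 1)) (rd 3 G) z + evw M1 G z"
      using RRit[OF U, of "b 1" 3 1] by blast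
    obtain M2 where M2: "\<forall>(c,v)\<in>set M2. (\<forall>x\<in>set v. \<not> isP x) \<and> length v = b 2"
      "\<And>G z. smooth_on U G \<Longrightarrow> z \<in> U \<Longrightarrow> rd 3 (app (replicate (b 2) (R 2)) G) z = app (replicate (b 2) (R 2)) (rd 3 G) z + evw M2 G z"
      using RRit[OF U, of "b 2" 3 2] by blast
    define s3 where "s3 = replicate (b 3) (R 3)"
    define s2 where "s2 = replicate (b 2) (R 2)"
    define s1 where "s1 = replicate (b 1) (R 1)"
    define M where "M = suf (s2 @ s3) M1 @ suf s3 (pre s1 M2)"
    have M': "\<forall>(c,v)\<in>set M. (\<forall>x\<in>set v. \<not> isP x) \<and> length v = mlen b"
        using M1(1) M2(1) unfolding M_def suf_def pre_def s1_def s2_def s3_def by (fastforce simp: mlen3)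
    show ?thesis
    proof (intro exI[of _ M] conjI[OF M'] allI impI ballI)
      fix G z assume G: "smooth_on U G" and z: "z \<in> U"
      define Y2 where "Y2 = app s3 G"
      define Y1 where "Y1 = app s2 Y2"
      have Y2: "smooth_on U Y2" unfolding Y2_def by (rule sm_app[OF U G])
      have Y1: "smooth_on U Y1" unfolding Y1_def by (rule sm_app[OF U Y2])
      have "rd i (app (Rw b) G) z = rd 3 (app s1 Y1) z"
        by (simp add: 3 Rw_def app_append s1_def Y1_def Y2_def s2_def s3_def)
      also have "\<dots> = app s1 (rd 3 Y1) z + evw M1 Y1 z"
        unfolding s1_def by (rule M1(2)[OF Y1 z])
      also have "app s1 (rd 3 Y1) z = app s1 (\<lambda>z. app s2 (rd 3 Y2) z + evw M2 Y2 z) z"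
        by (rule app_local[OF U _ z]) (unfold Y1_def s2_def, rule M2(2)[OF Y2])
      also have "\<dots> = app s1 (app s2 (rd 3 Y2)) z + app s1 (evw M2 Y2) z"
        by (rule app_add[OF U sm_app[OF U sm_rd[OF U Y2]] sm_evw[OF U Y2] z])
      also have "\<dots> = app (Rw (b(i := b i + 1))) G z + evw (suf s3 (pre s1 M2)) G z"
        using app_evw[OF U Y2 z, of s1 M2]
        by (simp add: 3 Rw_def app_append s1_def s2_def s3_def Y2_def evw_suf)
      also have "evw M1 Y1 = evw (suf (s2 @ s3) M1) G"
        by (simp add: evw_suf app_append Y1_def Y2_def)
      finally show "rd i (app (Rw b) G) z = app (Rw (b(i := b i + 1))) G z + evw M G z"
        unfolding M_def by (simp add: evw_append algebra_simps fun_upd_def)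
    qed
  qed
qed

lemma INS_R:
  assumes U: "open U"
  shows "\<exists>L. (\<forall>(c,v)\<in>set L. nP v = mlen a \<and> nR v = mlen b \<and> length v = mlen a + mlen b) \<and>
    (\<forall>G. smooth_on U G \<longrightarrow> (\<forall>z\<in>U. rd i (app (cw a b) G) z = app (cw a (b(i := b i + 1))) G z + evw L G z))"
proof -
  obtain K where K: "\<forall>(c,v)\<in>set K. (\<forall>x\<in>set v. isP x) \<and> length v = length (Pw a)"
    "\<And>G z. smooth_on U G \<Longrightarrow> z \<in> U \<Longrightarrow> rd i (app (Pw a) G) z = app (Pw a) (rd i G) z + evw K G z"
    using RP[OF U Pw_allP, where i=i] by blast
  obtain M where M: "\<forall>(c,v)\<in>set M. (\<forall>x\<in>set v. \<not> isP x) \<and> length v = mlen b"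
    "\<And>G z. smooth_on U G \<Longrightarrow> z \<in> U \<Longrightarrow> rd i (app (Rw b) G) z = app (Rw (b(i := b i + 1))) G z + evw M G z"
    using RRins[OF U, of b i] by blast
  define L where "L = pre (Pw a) M @ suf (Rw b) K"
  have L1: "\<forall>(c,v)\<in>set L. nP v = mlen a \<and> nR v = mlen b \<and> length v = mlen a + mlen b"
  proof
    fix cv assume "cv \<in> set L"
    then consider (m) c v where "(c, v) \<in> set M" "cv = (c, Pw a @ v)" | (k) c v where "(c, v) \<in> set K" "cv = (c, v @ Rw b)"
      unfolding L_def pre_def suf_def by auto
    thus "case cv of (c, v) \<Rightarrow> nP v = mlen a \<and> nR v = mlen b \<and> length v = mlen a + mlen b"
    proof cases
      case m
      have "(\<forall>x\<in>set v. \<not> isP x) \<and> length v = mlen b" using M(1) m(1) by fastforce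
      thus ?thesis using m(2) allR_counts[of v] allP_counts[OF Pw_allP[of a]] len_Pw[of a] by simp
    next
      case k
      have "(\<forall>x\<in>set v. isP x) \<and> length v = length (Pw a)" using K(1) k(1) by fastforce
      thus ?thesis using k(2) allP_counts[of v] allR_counts[OF Rw_allR[of b]] len_Pw[of a] len_Rw[of b] by simp
    qed
  qed
  show ?thesis
  proof (intro exI[of _ L] conjI[OF L1] allI impI ballI)
    fix G z assume G: "smooth_on U G" and z: "z \<in> U"
    have Y: "smooth_on U (app (Rw b) G)" by (rule sm_app[OF U G])
    have "rd i (app (cw a b) G) z = rd i (app (Pw a) (app (Rw b) G)) z" by (simp add: cw_def app_append)
    also have "\<dots> = app (Pw a) (rd i (app (Rw b) G)) z + evw K (app (Rw b) G) z" by (rule K(2)[OF Y z])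
    also have "app (Pw a) (rd i (app (Rw b) G)) z = app (Pw a) (\<lambda>z. app (Rw (b(i := b i + 1))) G z + evw M G z) z"
      by (rule app_local[OF U M(2)[OF G] z])
    also have "\<dots> = app (Pw a) (app (Rw (b(i := b i + 1))) G) z + app (Pw a) (evw M G) z"
      by (rule app_add[OF U sm_app[OF U G] sm_evw[OF U G] z])
    also have "\<dots> = app (cw a (b(i := b i + 1))) G z + evw (pre (Pw a) M) G z"
      using app_evw[OF U G z, of "Pw a" M] by (simp add: cw_def app_append)
    finally show "rd i (app (cw a b) G) z = app (cw a (b(i := b i + 1))) G z + evw L G z"
      unfolding L_def by (simp add: evw_append evw_suf)
  qed
qed

lemma INS:
  assumes U: "open U"
  shows "\<exists>Lw. (\<forall>(c,v)\<in>set Lw. nP v = nP (x # cw a b) \<and> nR v < nR (x # cw a b) \<and> length v < length (x # cw a b)) \<and>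
    (\<forall>G. smooth_on U G \<longrightarrow> (\<forall>z\<in>U. app (x # cw a b) G z = app (cw (cP (x # cw a b)) (cR (x # cw a b))) G z + evw Lw G z))"
proof (cases x)
  case (P m)
  have e: "cP (x # cw a b) = a(m := a m + 1)" "cR (x # cw a b) = b"
    by (auto simp: fun_eq_iff cP_Cons cR_Cons P)
  show ?thesis
  proof (intro exI[of _ "[]"] conjI allI impI ballI)
    fix G z assume G: "smooth_on U G" and z: "z \<in> U"
    show "app (x # cw a b) G z = app (cw (cP (x # cw a b)) (cR (x # cw a b))) G z + evw [] G z"
      unfolding e using INS_P[OF U sm_app[OF U G] z, of m a "Rw b"] by (simp add: P cw_def app_append)
  qed simp
next
  case (R i)
  have e: "cP (x # cw a b) = a" "cR (x # cw a b) = b(i := b i + 1)"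
    by (auto simp: fun_eq_iff cP_Cons cR_Cons R)
  obtain L where L: "\<forall>(c,v)\<in>set L. nP v = mlen a \<and> nR v = mlen b \<and> length v = mlen a + mlen b"
    "\<And>G z. smooth_on U G \<Longrightarrow> z \<in> U \<Longrightarrow> rd i (app (cw a b) G) z = app (cw a (b(i := b i + 1))) G z + evw L G z"
    using INS_R[OF U, of a b i] by blast
  have L1: "\<forall>(c,v)\<in>set L. nP v = nP (x # cw a b) \<and> nR v < nR (x # cw a b) \<and> length v < length (x # cw a b)"
    using L(1) by (auto simp: R)
  show ?thesis
    unfolding e by (intro exI[of _ L] conjI[OF L1] allI impI ballI) (use L(2) in \<open>simp add: R\<close>)
qed

definition goodL :: "nat \<Rightarrow> nat \<Rightarrow> (real \<times> op list) list \<Rightarrow> bool" where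
  "goodL p r L \<longleftrightarrow> (\<forall>(c,v)\<in>set L. \<exists>a b. v = cw a b \<and> mlen a = p \<and> mlen b < r)"

lemma goodL_append: "goodL p r (L1 @ L2) \<longleftrightarrow> goodL p r L1 \<and> goodL p r L2"
  unfolding goodL_def set_append ball_Un by blast
lemma goodL_scl: "goodL p r L \<Longrightarrow> goodL p r (scl d L)"
  unfolding goodL_def scl_def by auto
lemma goodL_mono: "goodL p r L \<Longrightarrow> r \<le> r' \<Longrightarrow> goodL p r' L"
  unfolding goodL_def by fastforce
lemma goodL_Nil[simp]: "goodL p r []" unfolding goodL_def by simp

definition REP :: "(real^3) set \<Rightarrow> nat \<Rightarrow> nat \<Rightarrow> ((real^3 \<Rightarrow> real) \<Rightarrow> real^3 \<Rightarrow> real) \<Rightarrow> bool" where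
  "REP U p r F \<longleftrightarrow> (\<exists>L. goodL p r L \<and> (\<forall>G. smooth_on U G \<longrightarrow> (\<forall>z\<in>U. F G z = evw L G z)))"

lemma conv:
  "(\<forall>(c,v)\<in>set Lw. REP U p r (app v)) \<Longrightarrow> REP U p r (evw Lw)"
proof (induction Lw)
  case Nil thus ?case unfolding REP_def by (intro exI[of _ "[]"]) auto
next
  case (Cons cv Lw)
  obtain c v where cv: "cv = (c, v)" by fastforce
  obtain L1 where L1: "goodL p r L1" "\<And>G z. smooth_on U G \<Longrightarrow> z \<in> U \<Longrightarrow> app v G z = evw L1 G z"
    using Cons.prems cv unfolding REP_def by auto
  obtain L2 where L2: "goodL p r L2" "\<And>G z. smooth_on U G \<Longrightarrow> z \<in> U \<Longrightarrow> evw Lw G z = evw L2 G z"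
    using Cons unfolding REP_def by auto
  show ?case unfolding REP_def
    by (intro exI[of _ "scl c L1 @ L2"] conjI allI impI ballI)
       (auto simp: goodL_append goodL_scl L1 L2 cv evw_append evw_scl)
qed

lemma NO:
  assumes U: "open U"
  shows "\<exists>L. goodL (nP w) (nR w) L \<and> (\<forall>G. smooth_on U G \<longrightarrow> (\<forall>z\<in>U. app w G z = app (cw (cP w) (cR w)) G z + evw L G z))"
proof (induction "length w" arbitrary: w rule: less_induct)
  case less
  have REPv: "REP U p r (app v)" if lv: "length v < length w" "nP v = p" "nR v < r" for v p r
  proof -
    obtain L where L: "goodL (nP v) (nR v) L" "\<And>G z. smooth_on U G \<Longrightarrow> z \<in> U \<Longrightarrow> app v G z = app (cw (cP v) (cR v)) G z + evw L G z"
      using less.hyps[OF lv(1)] by blast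
    have "goodL p r ((1, cw (cP v) (cR v)) # L)"
    proof -
      have "goodL p r [(1, cw (cP v) (cR v))]"
        unfolding goodL_def using lv mlen_cP[of v] mlen_cR[of v] by force
      thus ?thesis using goodL_mono[OF L(1), of r] lv goodL_append[of p r "[(1, cw (cP v) (cR v))]" L]
        by simp
    qed
    thus ?thesis unfolding REP_def using L(2) by (intro exI[of _ "(1, cw (cP v) (cR v)) # L"]) auto
  qed
  show ?case
  proof (cases w)
    case Nil thus ?thesis by (intro exI[of _ "[]"]) (auto simp: cw_def Pw_def Rw_def)
  next
    case (Cons x w')
    obtain L' where L': "goodL (nP w') (nR w') L'" "\<And>G z. smooth_on U G \<Longrightarrow> z \<in> U \<Longrightarrow> app w' G z = app (cw (cP w') (cR w')) G z + evw L' G z"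
      using less.hyps[of w'] Cons by auto
    obtain Lw where Lw: "\<forall>(c,v)\<in>set Lw. nP v = nP (x # cw (cP w') (cR w')) \<and> nR v < nR (x # cw (cP w') (cR w')) \<and> length v < length (x # cw (cP w') (cR w'))"
      "\<And>G z. smooth_on U G \<Longrightarrow> z \<in> U \<Longrightarrow> app (x # cw (cP w') (cR w')) G z = app (cw (cP (x # cw (cP w') (cR w'))) (cR (x # cw (cP w') (cR w')))) G z + evw Lw G z"
      using INS[OF U, of x "cP w'" "cR w'"] by blast
    have c1: "nP (x # cw (cP w') (cR w')) = nP w" "nR (x # cw (cP w') (cR w')) = nR w"
      "length (x # cw (cP w') (cR w')) = length w"
      using len_nPR[of w'] by (auto simp: Cons mlen_cP mlen_cR)
    have c2: "cP (x # cw (cP w') (cR w')) = cP w" "cR (x # cw (cP w') (cR w')) = cR w"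
      by (auto simp: Cons cP_Cons cR_Cons)
    have r1: "REP U (nP w) (nR w) (evw Lw)"
      by (rule conv) (use Lw(1) c1 in \<open>auto intro!: REPv\<close>)
    have r2: "REP U (nP w) (nR w) (evw (pre [x] L'))"
    proof (rule conv)
      show "\<forall>(c,v)\<in>set (pre [x] L'). REP U (nP w) (nR w) (app v)"
      proof
        fix cv assume "cv \<in> set (pre [x] L')"
        then obtain c v where cv: "cv = (c, x # v)" "(c, v) \<in> set L'" unfolding pre_def by auto
        then obtain a b where ab: "v = cw a b" "mlen a = nP w'" "mlen b < nR w'" using L'(1) unfolding goodL_def by fastforce
        have "REP U (nP w) (nR w) (app (x # v))"
          by (rule REPv) (use ab len_nPR[of w'] in \<open>auto simp: Cons\<close>)
        thus "case cv of (c, v) \<Rightarrow> REP U (nP w) (nR w) (app v)" using cv by simp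
      qed
    qed
    obtain L1 where L1: "goodL (nP w) (nR w) L1" "\<And>G z. smooth_on U G \<Longrightarrow> z \<in> U \<Longrightarrow> evw Lw G z = evw L1 G z"
      using r1 unfolding REP_def by auto
    obtain L2 where L2: "goodL (nP w) (nR w) L2" "\<And>G z. smooth_on U G \<Longrightarrow> z \<in> U \<Longrightarrow> evw (pre [x] L') G z = evw L2 G z"
      using r2 unfolding REP_def by auto
    show ?thesis
    proof (intro exI[of _ "L1 @ L2"] conjI allI impI ballI)
      show "goodL (nP w) (nR w) (L1 @ L2)" using L1 L2 by (simp add: goodL_append)
    next
      fix G z assume G: "smooth_on U G" and z: "z \<in> U"
      have "app w G z = app [x] (app w' G) z" by (simp add: Cons)
      also have "\<dots> = app [x] (\<lambda>z. app (cw (cP w') (cR w')) G z + evw L' G z) z"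
        by (rule app_local[OF U L'(2)[OF G] z])
      also have "\<dots> = app [x] (app (cw (cP w') (cR w')) G) z + app [x] (evw L' G) z"
        by (rule app_add[OF U sm_app[OF U G] sm_evw[OF U G] z])
      also have "\<dots> = app (x # cw (cP w') (cR w')) G z + evw (pre [x] L') G z"
        using app_evw[OF U G z, of "[x]" L'] by simp
      also have "\<dots> = app (cw (cP w) (cR w)) G z + evw (L1 @ L2) G z"
        using Lw(2)[OF G z] L1(2)[OF G z] L2(2)[OF G z] c2 by (simp add: evw_append)
      finally show "app w G z = app (cw (cP w) (cR w)) G z + evw (L1 @ L2) G z" .
    qed
  qed
qed

fun delP :: "3 \<Rightarrow> op list \<Rightarrow> op list list" where
  "delP l [] = []"
| "delP l (x # u) = (if x = P l then [u] else []) @ map (\<lambda>v. x # v) (delP l u)"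

lemma delP_props: "\<forall>x\<in>set u. isP x \<Longrightarrow> v \<in> set (delP l u) \<Longrightarrow>
   (\<forall>x\<in>set v. isP x) \<and> Suc (length v) = length u \<and> cP u = (\<lambda>m. cP v m + (if m = l then 1 else 0)) \<and> cR v = cR u"
proof (induction u arbitrary: v)
  case (Cons x u)
  show ?case
  proof (cases "v = u \<and> x = P l")
    case True thus ?thesis using Cons.prems by (auto simp: cP_Cons cR_Cons fun_eq_iff)
  next
    case False
    then obtain v0 where "v = x # v0" "v0 \<in> set (delP l u)" using Cons.prems(2) by (auto split: if_splits)
    thus ?thesis using Cons.IH[of v0] Cons.prems(1) by (auto simp: cP_Cons cR_Cons fun_eq_iff)
  qed
qed simp

lemma len_delP: "length (delP l u) = cP u l"
  by (induction u) (auto simp: cP_Cons)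

lemma sum_list_map_app: "(\<Sum>v\<leftarrow>L. (c::real) * F v) = c * (\<Sum>v\<leftarrow>L. F v)"
  by (induction L) (auto simp: algebra_simps)

lemma evw_onesf: "evw (map (\<lambda>v. (1, h v)) L) W y = (\<Sum>v\<leftarrow>L. app (h v) W y)"
  by (induction L) auto

lemma evw_ones: "evw (map (\<lambda>v. (1, v)) L) W y = (\<Sum>v\<leftarrow>L. app v W y)"
  by (induction L) auto

lemma pd_Y: "W differentiable at y \<Longrightarrow> pd m (\<lambda>z. z$l * W z) y = y$l * pd m W y + (if m = l then W y else 0)"
  using pd_mult[of "\<lambda>z. z$l" y W m] by simp

lemma LeibP:
  assumes U: "open U" and W: "smooth_on U W"
  shows "\<forall>x\<in>set u. isP x \<Longrightarrow> y \<in> U \<Longrightarrow> app u (\<lambda>z. z$l * W z) y = y$l * app u W y + (\<Sum>v\<leftarrow>delP l u. app v W y)"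
proof (induction u arbitrary: y)
  case Nil thus ?case by simp
next
  case (Cons x u)
  obtain m where x: "x = P m" using Cons.prems by (cases x) auto
  have sY: "smooth_on U (\<lambda>z. z$l * app u W z)" by (rule sm_mult[OF U sm_coord sm_app[OF U W]])
  have "app (x # u) (\<lambda>z. z$l * W z) y = app [P m] (\<lambda>z. z$l * app u W z + evw (map (\<lambda>v. (1, v)) (delP l u)) W z) y"
    using app_local[OF U _ Cons.prems(2), where w="[P m]" and g="app u (\<lambda>z. z$l * W z)"] Cons.IH Cons.prems(1)
    by (simp add: x evw_ones)
  also have "\<dots> = app [P m] (\<lambda>z. z$l * app u W z) y + app [P m] (evw (map (\<lambda>v. (1, v)) (delP l u)) W) y"
    by (rule app_add[OF U sY sm_evw[OF U W] Cons.prems(2)])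
  also have "app [P m] (evw (map (\<lambda>v. (1, v)) (delP l u)) W) y = (\<Sum>v\<leftarrow>delP l u. app (P m # v) W y)"
    using app_evw[OF U W Cons.prems(2), of "[P m]"] by (simp add: pre_def comp_def evw_onesf)
  also have "app [P m] (\<lambda>z. z$l * app u W z) y = y$l * app (x # u) W y + (if m = l then app u W y else 0)"
    using pd_Y[OF sm_diff_at[OF U sm_app[OF U W] Cons.prems(2)]] by (simp add: x)
  finally show ?case by (simp add: x comp_def)
qed

lemma app_sum3:
  fixes F :: "3 \<Rightarrow> real^3 \<Rightarrow> real"
  assumes U: "open U" and F: "\<And>l. smooth_on U (F l)" and y: "y \<in> U"
  shows "app u (\<lambda>z. \<Sum>l\<in>UNIV. F l z) y = (\<Sum>l\<in>UNIV. app u (F l) y)"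
proof -
  have "app u (\<lambda>z. F 1 z + F 2 z + F 3 z) y = app u (\<lambda>z. F 1 z + F 2 z) y + app u (F 3) y"
    by (rule app_add[OF U sm_add[OF U F F] F y])
  also have "app u (\<lambda>z. F 1 z + F 2 z) y = app u (F 1) y + app u (F 2) y"
    by (rule app_add[OF U F F y])
  finally show ?thesis by (simp add: sum_3)
qed

lemma app_lin2:
  assumes U: "open U" and F: "smooth_on U F" and H: "smooth_on U H" and y: "y \<in> U"
  shows "app u (\<lambda>z. c * F z + d * H z) y = c * app u F y + d * app u H y"
  using app_add[OF U sm_cmult[OF U F] sm_cmult[OF U H] y, of u] app_cmult[OF U F y] app_cmult[OF U H y] by simp

lemma sig_expand: "sig A B z = A - B * (\<Sum>l\<in>UNIV. z$l * z$l)"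
  by (simp add: sig_fun)

lemma Lsig:
  assumes U: "open U" and W: "smooth_on U W" and u: "\<forall>x\<in>set u. isP x" and y: "y \<in> U"
  shows "app u (\<lambda>z. sig A B z * W z) y = sig A B y * app u W y
     - 2 * B * (\<Sum>l\<in>UNIV. y$l * (\<Sum>v\<leftarrow>delP l u. app v W y))
     - B * (\<Sum>l\<in>UNIV. \<Sum>v\<leftarrow>delP l u. \<Sum>v'\<leftarrow>delP l v. app v' W y)"
proof -
  define YY where "YY l z = z$l * (z$l * W z)" for l z
  have sYY: "smooth_on U (YY l)" for l unfolding YY_def by (intro sm_mult[OF U] sm_coord W)
  have e0: "(\<lambda>z. sig A B z * W z) = (\<lambda>z. A * W z + (- B) * (\<Sum>l\<in>UNIV. YY l z))"
    by (rule ext) (simp add: sig_expand YY_def sum_3 algebra_simps)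
  have YYe: "app u (YY l) y = y$l * (y$l * app u W y + (\<Sum>v\<leftarrow>delP l u. app v W y))
      + (\<Sum>v\<leftarrow>delP l u. y$l * app v W y + (\<Sum>v'\<leftarrow>delP l v. app v' W y))" for l
  proof -
    have sW: "smooth_on U (\<lambda>z. z$l * W z)" by (intro sm_mult[OF U] sm_coord W)
    have "app u (YY l) y = y$l * app u (\<lambda>z. z$l * W z) y + (\<Sum>v\<leftarrow>delP l u. app v (\<lambda>z. z$l * W z) y)"
      unfolding YY_def by (rule LeibP[OF U sW u y])
    also have "app u (\<lambda>z. z$l * W z) y = y$l * app u W y + (\<Sum>v\<leftarrow>delP l u. app v W y)"
      by (rule LeibP[OF U W u y])
    also have "(\<Sum>v\<leftarrow>delP l u. app v (\<lambda>z. z$l * W z) y) = (\<Sum>v\<leftarrow>delP l u. y$l * app v W y + (\<Sum>v'\<leftarrow>delP l v. app v' W y))"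
      by (rule arg_cong[of _ _ sum_list], rule map_cong[OF refl], rule LeibP[OF U W _ y])
         (use delP_props[OF u] in blast)
    finally show ?thesis .
  qed
  have "app u (\<lambda>z. sig A B z * W z) y = A * app u W y + (- B) * app u (\<lambda>z. \<Sum>l\<in>UNIV. YY l z) y"
    unfolding e0 by (rule app_lin2[OF U W sm_sum[OF U finite_class.finite_UNIV sYY] y])
  also have "app u (\<lambda>z. \<Sum>l\<in>UNIV. YY l z) y = (\<Sum>l\<in>UNIV. app u (YY l) y)"
    by (rule app_sum3[OF U sYY y])
  also have "\<dots> = (\<Sum>l\<in>UNIV. y$l * (y$l * app u W y + (\<Sum>v\<leftarrow>delP l u. app v W y))
      + (\<Sum>v\<leftarrow>delP l u. y$l * app v W y + (\<Sum>v'\<leftarrow>delP l v. app v' W y)))"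
    by (simp add: YYe)
  finally have E: "app u (\<lambda>z. sig A B z * W z) y = A * app u W y + - B * (\<Sum>l\<in>UNIV. y$l * (y$l * app u W y + (\<Sum>v\<leftarrow>delP l u. app v W y))
      + (\<Sum>v\<leftarrow>delP l u. y$l * app v W y + (\<Sum>v'\<leftarrow>delP l v. app v' W y)))" .
  show ?thesis unfolding E sig_expand[of A B y]
    by (simp add: sum_3 sum_list_addf sum_list_map_app algebra_simps)
qed

lemma pd_sig: "pd k (sig A B) y = -2 * B * y$k"
proof -
  have e: "(\<lambda>t. sig A B (y + t *\<^sub>R ax k)) = (\<lambda>t. A - B * (inner y y + 2 * t * y$k + t*t))"
    by (rule ext) (simp add: sig_def power2_norm_eq_inner inner_add_left inner_add_right inner_axis inner_axis' inner_axis_axis algebra_simps)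
  have "((\<lambda>t. A - B * (inner y y + 2 * t * y$k + t*t)) has_real_derivative -2*B*y$k) (at 0)"
    by (auto intro!: derivative_eq_intros)
  thus ?thesis unfolding pd_def e by (rule DERIV_imp_deriv)
qed

lemma rd_mult: assumes "F differentiable at y" "H differentiable at y"
  shows "rd i (\<lambda>z. F z * H z) y = F y * rd i H y + H y * rd i F y"
  unfolding rd_def using pd_mult[OF assms]
  by (simp add: sum_distrib_left sum.distrib[symmetric] algebra_simps)

lemma rd_sig: "rd i (sig A B) y = 0"
  unfolding rd_def pd_sig using exhaust_3[of i] by (auto simp: sum_3 levi_def algebra_simps)

lemma rd_coord: "rd i (\<lambda>z. z$l) y = (\<Sum>j\<in>UNIV. levi i j l * y$j)"
  unfolding rd_def using exhaust_3[of l] by (auto simp: sum_3 algebra_simps)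

lemma sig_diff: "sig A B differentiable at y"
  using sm_diff_at[OF open_UNIV sm_sig[OF open_UNIV] UNIV_I] .

lemma Rsig:
  assumes U: "open U" and W: "smooth_on U W"
  shows "\<forall>x\<in>set v. \<not> isP x \<Longrightarrow> y \<in> U \<Longrightarrow> app v (\<lambda>z. sig A B z * W z) y = sig A B y * app v W y"
proof (induction v arbitrary: y)
  case (Cons x v)
  obtain i where x: "x = R i" using Cons.prems by (cases x) auto
  have "app (x # v) (\<lambda>z. sig A B z * W z) y = rd i (\<lambda>z. sig A B z * app v W z) y"
    using rd_local[OF U _ Cons.prems(2), of "app v (\<lambda>z. sig A B z * W z)" "\<lambda>z. sig A B z * app v W z" i]
      Cons.IH Cons.prems(1) by (simp add: x)
  also have "\<dots> = sig A B y * app (x # v) W y"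
    using rd_mult[OF sig_diff sm_diff_at[OF U sm_app[OF U W] Cons.prems(2)]] rd_sig by (simp add: x)
  finally show ?case .
qed simp

lemma rd_Y: assumes "H differentiable at y"
  shows "rd i (\<lambda>z. z$l * H z) y = y$l * rd i H y + H y * (\<Sum>j\<in>UNIV. levi i j l * y$j)"
  using rd_mult[OF coord_diff assms] rd_coord by simp

lemma RY:
  assumes U: "open U"
  shows "\<forall>x\<in>set v. \<not> isP x \<Longrightarrow> \<exists>M. (\<forall>l. \<forall>(c,w)\<in>set (M l). (\<forall>x\<in>set w. \<not> isP x) \<and> length w < length v) \<and>
    (\<forall>W. smooth_on U W \<longrightarrow> (\<forall>y\<in>U. app v (\<lambda>z. z$k * W z) y = y$k * app v W y + (\<Sum>l\<in>UNIV. y$l * evw (M l) W y)))"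
proof (induction v)
  case Nil thus ?case by (intro exI[of _ "\<lambda>l. []"]) simp
next
  case (Cons x v0)
  obtain i where x: "x = R i" using Cons.prems by (cases x) auto
  obtain M0 where M0: "\<forall>l. \<forall>(c,w)\<in>set (M0 l). (\<forall>x\<in>set w. \<not> isP x) \<and> length w < length v0"
    "\<And>W y. smooth_on U W \<Longrightarrow> y \<in> U \<Longrightarrow> app v0 (\<lambda>z. z$k * W z) y = y$k * app v0 W y + (\<Sum>l\<in>UNIV. y$l * evw (M0 l) W y)"
    using Cons by auto
  define M where "M j = (levi i j k, v0) # pre [R i] (M0 j) @ scl (levi i j 1) (M0 1) @ scl (levi i j 2) (M0 2) @ scl (levi i j 3) (M0 3)" for j
  have M1: "\<forall>l. \<forall>(c,w)\<in>set (M l). (\<forall>x\<in>set w. \<not> isP x) \<and> length w < length (x # v0)"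
  proof (intro allI ballI)
    fix l cw assume "cw \<in> set (M l)"
    thus "case cw of (c, w) \<Rightarrow> (\<forall>x\<in>set w. \<not> isP x) \<and> length w < length (x # v0)"
      using M0(1) Cons.prems unfolding M_def pre_def scl_def by (fastforce simp: x)
  qed
  show ?case
  proof (intro exI[of _ M] conjI[OF M1] allI impI ballI)
    fix W y assume W: "smooth_on U W" and y: "y \<in> U"
    define E where "E l = evw (M0 l) W" for l
    have sE: "smooth_on U (E l)" for l unfolding E_def by (rule sm_evw[OF U W])
    have sF: "smooth_on U (\<lambda>z. z$l * E l z)" for l by (rule sm_mult[OF U sm_coord sE])
    have sV: "smooth_on U (\<lambda>z. z$k * app v0 W z)" by (rule sm_mult[OF U sm_coord sm_app[OF U W]])
    have "app (x # v0) (\<lambda>z. z$k * W z) y = app [R i] (\<lambda>z. z$k * app v0 W z + (\<Sum>l\<in>UNIV. z$l * E l z)) y"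
      using app_local[OF U M0(2)[OF W] y, where w="[R i]"] by (simp add: x E_def)
    also have "\<dots> = app [R i] (\<lambda>z. z$k * app v0 W z) y + app [R i] (\<lambda>z. \<Sum>l\<in>UNIV. z$l * E l z) y"
      by (rule app_add[OF U sV sm_sum[OF U finite_class.finite_UNIV sF] y])
    also have "app [R i] (\<lambda>z. \<Sum>l\<in>UNIV. z$l * E l z) y = (\<Sum>l\<in>UNIV. app [R i] (\<lambda>z. z$l * E l z) y)"
      by (rule app_sum3[OF U sF y])
    also have "\<dots> = (\<Sum>l\<in>UNIV. y$l * evw (pre [R i] (M0 l)) W y + E l y * (\<Sum>j\<in>UNIV. levi i j l * y$j))"
    proof (rule sum.cong[OF refl])
      fix l
      have "app [R i] (\<lambda>z. z$l * E l z) y = y$l * rd i (E l) y + E l y * (\<Sum>j\<in>UNIV. levi i j l * y$j)"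
        using rd_Y[OF sm_diff_at[OF U sE y]] by simp
      moreover have "rd i (E l) y = evw (pre [R i] (M0 l)) W y"
        using app_evw[OF U W y, of "[R i]" "M0 l"] by (simp add: E_def)
      ultimately show "app [R i] (\<lambda>z. z$l * E l z) y = y$l * evw (pre [R i] (M0 l)) W y + E l y * (\<Sum>j\<in>UNIV. levi i j l * y$j)"
        by simp
    qed
    also have "app [R i] (\<lambda>z. z$k * app v0 W z) y = y$k * app (x # v0) W y + app v0 W y * (\<Sum>j\<in>UNIV. levi i j k * y$j)"
      using rd_Y[OF sm_diff_at[OF U sm_app[OF U W] y]] by (simp add: x)
    finally show "app (x # v0) (\<lambda>z. z$k * W z) y = y$k * app (x # v0) W y + (\<Sum>l\<in>UNIV. y$l * evw (M l) W y)"
      unfolding M_def by (simp add: evw_append evw_scl E_def sum_3 algebra_simps)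
  qed
qed

lemma sig_pos: assumes "A > 0" "B > 0" "y \<in> ball 0 (sqrt (A / B))" shows "sig A B y > 0"
proof -
  have "norm y < sqrt (A / B)" using assms(3) by simp
  hence "norm y ^ 2 < (sqrt (A / B)) ^ 2" by (intro power_strict_mono) auto
  hence "norm y ^ 2 < A / B" using assms(1,2) by simp
  thus ?thesis using assms(1,2) by (simp add: sig_def field_simps)
qed

lemma E0:
  assumes U: "open U" and H: "smooth_on U H" and y: "y \<in> U" and pos: "sig A B y > 0"
  shows "sig A B y powr (- e) * pd k (\<lambda>w. sig A B w powr (e + 1) * H w) y
       = sig A B y * pd k H y - 2 * B * (e + 1) * y$k * H y"
proof -
  define s where "s t = sig A B (y + t *\<^sub>R ax k)" for t
  define h where "h t = H (y + t *\<^sub>R ax k)" for t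
  have ds: "DERIV s 0 :> -2 * B * y$k" unfolding s_def using pd_deriv[OF sig_diff[of A B y], of k] pd_sig by simp
  have dh: "DERIV h 0 :> pd k H y" unfolding h_def by (rule pd_deriv[OF sm_diff_at[OF U H y]])
  have s0: "s 0 = sig A B y" "h 0 = H y" by (simp_all add: s_def h_def)
  have dp: "DERIV (\<lambda>t. s t powr (e + 1)) 0 :> s 0 powr (e + 1) * (0 * ln (s 0) + (-2 * B * y$k) * (e + 1) / s 0)"
    by (rule DERIV_powr[OF ds _ DERIV_const]) (use pos s0 in simp)
  have "DERIV (\<lambda>t. s t powr (e + 1) * h t) 0 :>
      s 0 powr (e + 1) * (0 * ln (s 0) + (-2 * B * y$k) * (e + 1) / s 0) * h 0 + pd k H y * s 0 powr (e + 1)"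
    by (rule DERIV_mult[OF dp dh])
  hence PE: "pd k (\<lambda>w. sig A B w powr (e + 1) * H w) y =
      sig A B y powr (e + 1) * ((-2 * B * y$k) * (e + 1) / sig A B y) * H y + pd k H y * sig A B y powr (e + 1)"
    unfolding pd_def using DERIV_imp_deriv s0 by (simp add: s_def h_def)
  have QP: "sig A B y powr (- e) * sig A B y powr (e + 1) = sig A B y"
    using pos by (simp add: powr_add[symmetric])
  have "sig A B y powr (- e) * pd k (\<lambda>w. sig A B w powr (e + 1) * H w) y
     = (sig A B y powr (- e) * sig A B y powr (e + 1)) * (((-2 * B * y$k) * (e + 1) / sig A B y) * H y)
       + (sig A B y powr (- e) * sig A B y powr (e + 1)) * pd k H y"
    unfolding PE by (simp add: algebra_simps)
  also have "\<dots> = sig A B y * pd k H y - 2 * B * (e + 1) * y$k * H y"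
    unfolding QP using pos by (simp add: field_simps)
  finally show ?thesis .
qed

definition Sm :: "nat \<Rightarrow> nat \<Rightarrow> (real^3 \<Rightarrow> real) \<Rightarrow> real^3 \<Rightarrow> real" where
  "Sm p r f y = (\<Sum>j<r. absD p j f y)"

definition Bnd :: "(real^3) set \<Rightarrow> nat \<Rightarrow> nat \<Rightarrow> ((real^3 \<Rightarrow> real) \<Rightarrow> real^3 \<Rightarrow> real) \<Rightarrow> bool" where
  "Bnd U p r F \<longleftrightarrow> (\<exists>K. \<forall>f. smooth_on U f \<longrightarrow> (\<forall>y\<in>U. \<bar>F f y\<bar> \<le> K * Sm p r f y))"

definition BndA :: "(real^3) set \<Rightarrow> nat \<Rightarrow> nat \<Rightarrow> nat \<Rightarrow> ((real^3 \<Rightarrow> real) \<Rightarrow> real^3 \<Rightarrow> real) \<Rightarrow> bool" where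
  "BndA U n p r F \<longleftrightarrow> (\<exists>K. \<forall>f. smooth_on U f \<longrightarrow> (\<forall>y\<in>U. \<bar>F f y\<bar> \<le> K * real n * Sm p r f y))"

lemma absD_nonneg: "absD p j f y \<ge> 0"
  unfolding absD_def by (intro sum_nonneg) auto

lemma Sm_nonneg: "Sm p r f y \<ge> 0"
  unfolding Sm_def by (intro sum_nonneg absD_nonneg)

lemma le_mlen: "a i \<le> mlen a"
  unfolding mlen_def by (rule member_le_sum) auto

lemma finite_mlen: "finite {a :: 3 \<Rightarrow> nat. mlen a = p}"
proof -
  have "{a :: 3 \<Rightarrow> nat. mlen a = p} \<subseteq> Pi\<^sub>E UNIV (\<lambda>_. {..p})"
    using le_mlen by (auto simp: PiE_UNIV_domain)
  moreover have "finite (Pi\<^sub>E (UNIV :: 3 set) (\<lambda>_. {..p}))" by (rule finite_PiE) auto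
  ultimately show ?thesis by (rule finite_subset)
qed

lemma dpow_le_absD: "mlen a = p \<Longrightarrow> \<bar>dpow a (rpow b f) y\<bar> \<le> absD p (mlen b) f y"
proof -
  assume a: "mlen a = p"
  have "\<bar>dpow a (rpow b f) y\<bar> \<le> (\<Sum>b'\<in>{b'. mlen b' = mlen b}. \<bar>dpow a (rpow b' f) y\<bar>)"
    by (rule member_le_sum[where f="\<lambda>b'. \<bar>dpow a (rpow b' f) y\<bar>"]) (auto intro: finite_mlen)
  also have "\<dots> \<le> absD p (mlen b) f y"
    unfolding absD_def
    by (rule member_le_sum[where f="\<lambda>a'. \<Sum>b'\<in>{b'. mlen b' = mlen b}. \<bar>dpow a' (rpow b' f) y\<bar>"])
       (use a in \<open>auto intro: finite_mlen sum_nonneg\<close>)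
  finally show ?thesis .
qed

lemma cw_le_Sm: "mlen a = p \<Longrightarrow> mlen b < r \<Longrightarrow> \<bar>app (cw a b) f y\<bar> \<le> Sm p r f y"
proof -
  assume a: "mlen a = p" and b: "mlen b < r"
  have "\<bar>app (cw a b) f y\<bar> \<le> absD p (mlen b) f y" unfolding app_cw by (rule dpow_le_absD[OF a])
  also have "\<dots> \<le> Sm p r f y" unfolding Sm_def
    by (rule member_le_sum[where f="\<lambda>j. absD p j f y"]) (use b in \<open>auto intro: absD_nonneg\<close>)
  finally show ?thesis .
qed

lemma evw_le: "goodL p r L \<Longrightarrow> \<bar>evw L f y\<bar> \<le> (\<Sum>(c,v)\<leftarrow>L. \<bar>c\<bar>) * Sm p r f y"
proof (induction L)
  case (Cons cv L)
  obtain c v where cv: "cv = (c, v)" by fastforce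
  obtain a b where ab: "v = cw a b" "mlen a = p" "mlen b < r" using Cons.prems cv unfolding goodL_def by auto
  have gL: "goodL p r L" using Cons.prems unfolding goodL_def by auto
  have "\<bar>evw (cv # L) f y\<bar> \<le> \<bar>c\<bar> * \<bar>app v f y\<bar> + \<bar>evw L f y\<bar>"
    by (simp add: cv abs_mult[symmetric] abs_triangle_ineq)
  also have "\<dots> \<le> \<bar>c\<bar> * Sm p r f y + (\<Sum>(c,v)\<leftarrow>L. \<bar>c\<bar>) * Sm p r f y"
    using cw_le_Sm[OF ab(2,3), of f y] Cons.IH[OF gL] ab(1) by (intro add_mono mult_left_mono) auto
  finally show ?case by (simp add: cv algebra_simps)
qed simp

lemma REP_Bnd: "REP U p r F \<Longrightarrow> Bnd U p r F"
  unfolding REP_def Bnd_def using evw_le by metis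

lemma Bnd_eq: "Bnd U p r F \<Longrightarrow> (\<And>f y. smooth_on U f \<Longrightarrow> y \<in> U \<Longrightarrow> H f y = F f y) \<Longrightarrow> Bnd U p r H"
  unfolding Bnd_def by metis

lemma Bnd_add: assumes "Bnd U p r F" "Bnd U p r H" shows "Bnd U p r (\<lambda>f y. F f y + H f y)"
proof -
  obtain K1 where K1: "\<And>f y. smooth_on U f \<Longrightarrow> y \<in> U \<Longrightarrow> \<bar>F f y\<bar> \<le> K1 * Sm p r f y" using assms(1) unfolding Bnd_def by blast
  obtain K2 where K2: "\<And>f y. smooth_on U f \<Longrightarrow> y \<in> U \<Longrightarrow> \<bar>H f y\<bar> \<le> K2 * Sm p r f y" using assms(2) unfolding Bnd_def by blast
  show ?thesis unfolding Bnd_def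
    by (rule exI[of _ "K1 + K2"]) (auto simp: algebra_simps intro!: order_trans[OF abs_triangle_ineq] add_mono K1 K2)
qed

lemma Bnd_coef: assumes "Bnd U p r F" "\<And>y. y \<in> U \<Longrightarrow> \<bar>c y\<bar> \<le> M" shows "Bnd U p r (\<lambda>f y. c y * F f y)"
proof -
  obtain K where K: "\<And>f y. smooth_on U f \<Longrightarrow> y \<in> U \<Longrightarrow> \<bar>F f y\<bar> \<le> K * Sm p r f y" using assms(1) unfolding Bnd_def by blast
  have "\<bar>c y * F f y\<bar> \<le> (\<bar>M\<bar> * K) * Sm p r f y" if "smooth_on U f" "y \<in> U" for f y
  proof -
    have "\<bar>c y * F f y\<bar> = \<bar>c y\<bar> * \<bar>F f y\<bar>" by (simp add: abs_mult)
    also have "\<dots> \<le> \<bar>M\<bar> * (K * Sm p r f y)"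
      by (rule mult_mono) (use assms(2)[of y] K[OF that] that in auto)
    finally show ?thesis by (simp add: algebra_simps)
  qed
  thus ?thesis unfolding Bnd_def by blast
qed

lemma Bnd_cmult: "Bnd U p r F \<Longrightarrow> Bnd U p r (\<lambda>f y. c * F f y)"
  using Bnd_coef[of U p r F "\<lambda>y. c" "\<bar>c\<bar>"] by simp

lemma Bnd_zero: "Bnd U p r (\<lambda>f y. 0)"
  unfolding Bnd_def by (rule exI[of _ 0]) simp

lemma Bnd_diff: "Bnd U p r F \<Longrightarrow> Bnd U p r H \<Longrightarrow> Bnd U p r (\<lambda>f y. F f y - H f y)"
  using Bnd_add[of U p r F "\<lambda>f y. (-1) * H f y"] Bnd_cmult[of U p r H "-1"] by simp

lemma Bnd_sum_list: "(\<And>v. v \<in> set L \<Longrightarrow> Bnd U p r (H v)) \<Longrightarrow> Bnd U p r (\<lambda>f y. \<Sum>v\<leftarrow>L. H v f y)"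
proof (induction L)
  case Nil thus ?case using Bnd_zero by simp
next
  case (Cons v L)
  thus ?case using Bnd_add[of U p r "H v" "\<lambda>f y. \<Sum>v\<leftarrow>L. H v f y"] by simp
qed

lemma Bnd_sum3: "(\<And>l. Bnd U p r (H l)) \<Longrightarrow> Bnd U p r (\<lambda>f y. \<Sum>l\<in>(UNIV::3 set). H l f y)"
  unfolding sum_3 by (intro Bnd_add) auto

lemma word_Bnd: assumes U: "open U" and "nP w = p" "nR w < r" shows "Bnd U p r (app w)"
proof -
  obtain L where L: "goodL (nP w) (nR w) L" "\<And>G z. smooth_on U G \<Longrightarrow> z \<in> U \<Longrightarrow> app w G z = app (cw (cP w) (cR w)) G z + evw L G z"
    using NO[OF U, of w] by blast
  have g: "goodL p r ((1, cw (cP w) (cR w)) # L)"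
  proof -
    have "goodL p r [(1, cw (cP w) (cR w))]"
      unfolding goodL_def using assms mlen_cP[of w] mlen_cR[of w] by force
    thus ?thesis using goodL_mono[OF L(1), of r] assms goodL_append[of p r "[(1, cw (cP w) (cR w))]" L] by simp
  qed
  show ?thesis by (rule REP_Bnd) (unfold REP_def, use g L(2) in \<open>intro exI[of _ "(1, cw (cP w) (cR w)) # L"], auto\<close>)
qed

lemma wdiff_Bnd:
  assumes U: "open U" and "cP w1 = cP w2" "cR w1 = cR w2" "nP w1 = p" "nR w1 \<le> r"
  shows "Bnd U p r (\<lambda>f y. app w1 f y - app w2 f y)"
proof -
  obtain L1 where L1: "goodL (nP w1) (nR w1) L1" "\<And>G z. smooth_on U G \<Longrightarrow> z \<in> U \<Longrightarrow> app w1 G z = app (cw (cP w1) (cR w1)) G z + evw L1 G z"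
    using NO[OF U, of w1] by blast
  obtain L2 where L2: "goodL (nP w2) (nR w2) L2" "\<And>G z. smooth_on U G \<Longrightarrow> z \<in> U \<Longrightarrow> app w2 G z = app (cw (cP w2) (cR w2)) G z + evw L2 G z"
    using NO[OF U, of w2] by blast
  have n: "nP w2 = nP w1" "nR w2 = nR w1" using assms(2,3) mlen_cP mlen_cR by metis+
  have g: "goodL p r (L1 @ scl (-1) L2)"
    using goodL_mono[OF L1(1)] goodL_mono[OF L2(1)] assms n by (simp add: goodL_append goodL_scl)
  show ?thesis
    by (rule REP_Bnd) (unfold REP_def, use g L1(2) L2(2) assms(2,3) in \<open>intro exI[of _ "L1 @ scl (-1) L2"], auto simp: evw_append evw_scl\<close>)
qed

lemma evw_Bnd:
  assumes U: "open U" and "\<forall>(c,v)\<in>set L. nP v = p \<and> nR v < r"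
  shows "Bnd U p r (evw L)"
  using assms(2)
proof (induction L)
  case Nil thus ?case using Bnd_zero[of U p r] by simp
next
  case (Cons cv L)
  obtain c v where cv: "cv = (c, v)" by fastforce
  have "Bnd U p r (\<lambda>f y. c * app v f y + evw L f y)"
    using Cons cv by (intro Bnd_add Bnd_cmult word_Bnd[OF U]) auto
  thus ?case by (simp add: cv)
qed

lemma BndA_add: assumes "BndA U n p r F" "BndA U n p r H" shows "BndA U n p r (\<lambda>f y. F f y + H f y)"
proof -
  obtain K1 where K1: "\<And>f y. smooth_on U f \<Longrightarrow> y \<in> U \<Longrightarrow> \<bar>F f y\<bar> \<le> K1 * real n * Sm p r f y" using assms(1) unfolding BndA_def by blast
  obtain K2 where K2: "\<And>f y. smooth_on U f \<Longrightarrow> y \<in> U \<Longrightarrow> \<bar>H f y\<bar> \<le> K2 * real n * Sm p r f y" using assms(2) unfolding BndA_def by blast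
  have "\<bar>F f y + H f y\<bar> \<le> (K1 + K2) * real n * Sm p r f y" if "smooth_on U f" "y \<in> U" for f y
  proof -
    have "\<bar>F f y + H f y\<bar> \<le> \<bar>F f y\<bar> + \<bar>H f y\<bar>" by (rule abs_triangle_ineq)
    also have "\<dots> \<le> K1 * real n * Sm p r f y + K2 * real n * Sm p r f y" by (intro add_mono K1 K2 that)
    finally show ?thesis by (simp add: algebra_simps)
  qed
  thus ?thesis unfolding BndA_def by blast
qed

lemma BndA_cmult: assumes "BndA U n p r F" shows "BndA U n p r (\<lambda>f y. c * F f y)"
proof -
  obtain K where K: "\<And>f y. smooth_on U f \<Longrightarrow> y \<in> U \<Longrightarrow> \<bar>F f y\<bar> \<le> K * real n * Sm p r f y" using assms unfolding BndA_def by blast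
  have "\<bar>c * F f y\<bar> \<le> (\<bar>c\<bar> * K) * real n * Sm p r f y" if "smooth_on U f" "y \<in> U" for f y
    using mult_left_mono[OF K[OF that], of "\<bar>c\<bar>"] by (simp add: abs_mult algebra_simps)
  thus ?thesis unfolding BndA_def by blast
qed

lemma BndA_sum3: "(\<And>l. BndA U n p r (H l)) \<Longrightarrow> BndA U n p r (\<lambda>f y. \<Sum>l\<in>(UNIV::3 set). H l f y)"
  unfolding sum_3 by (intro BndA_add) auto

lemma BndA_list:
  assumes "\<And>v. v \<in> set L \<Longrightarrow> Bnd U p r (H v)" and "L \<noteq> [] \<Longrightarrow> n \<ge> 1"
  shows "BndA U n p r (\<lambda>f y. \<Sum>v\<leftarrow>L. H v f y)"
proof (cases "L = []")
  case True thus ?thesis unfolding BndA_def by (intro exI[of _ 0]) simp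
next
  case False
  obtain K where K: "\<And>f y. smooth_on U f \<Longrightarrow> y \<in> U \<Longrightarrow> \<bar>\<Sum>v\<leftarrow>L. H v f y\<bar> \<le> K * Sm p r f y"
    using Bnd_sum_list[of L U p r H] assms(1) unfolding Bnd_def by blast
  have n: "real n \<ge> 1" using assms(2) False by simp
  have "\<bar>\<Sum>v\<leftarrow>L. H v f y\<bar> \<le> \<bar>K\<bar> * real n * Sm p r f y" if "smooth_on U f" "y \<in> U" for f y
  proof -
    have "K * Sm p r f y \<le> \<bar>K\<bar> * Sm p r f y" by (rule mult_right_mono) (auto simp: Sm_nonneg)
    also have "\<dots> \<le> \<bar>K\<bar> * (real n * Sm p r f y)"
    proof (rule mult_left_mono)
      have "1 * Sm p r f y \<le> real n * Sm p r f y" by (rule mult_right_mono) (use n Sm_nonneg[of p r f y] in auto)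
      thus "Sm p r f y \<le> real n * Sm p r f y" by simp
    qed simp
    finally show ?thesis using K[OF that] by (simp add: algebra_simps)
  qed
  thus ?thesis unfolding BndA_def by blast
qed

lemma levi_id:
  fixes W :: "3 \<Rightarrow> real" and y :: "real^3"
  shows "(\<Sum>i\<in>UNIV. levi i l k * (\<Sum>j\<in>UNIV. \<Sum>m\<in>UNIV. levi i j m * y$j * W m)) = y$l * W k - y$k * W l"
  using exhaust_3[of l] exhaust_3[of k] by (auto simp: sum_3 levi_def algebra_simps)

lemma expandR:
  assumes U: "open U" and f: "smooth_on U f" and v: "\<forall>x\<in>set v. isP x" and y: "y \<in> U"
  shows "app (v @ [R i] @ Rb) f y = (\<Sum>j\<in>UNIV. \<Sum>m\<in>UNIV. levi i j m *
      (y$j * app (v @ [P m] @ Rb) f y + (\<Sum>v''\<leftarrow>delP j v. app (v'' @ [P m] @ Rb) f y)))"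
proof -
  define G where "G = app Rb f"
  have G: "smooth_on U G" unfolding G_def by (rule sm_app[OF U f])
  have sH: "smooth_on U (\<lambda>z. z$j * pd m G z)" for j m by (rule sm_mult[OF U sm_coord sm_pd[OF G]])
  have sF: "smooth_on U (\<lambda>z. \<Sum>m\<in>UNIV. levi i j m * (z$j * pd m G z))" for j
    by (rule sm_sum[OF U finite_class.finite_UNIV sm_cmult[OF U sH]])
  have rdG: "rd i G = (\<lambda>z. \<Sum>j\<in>UNIV. \<Sum>m\<in>UNIV. levi i j m * (z$j * pd m G z))"
    unfolding rd_fun by (simp add: mult.assoc)
  have "app (v @ [R i] @ Rb) f y = app v (rd i G) y" by (simp add: app_append G_def)
  also have "\<dots> = (\<Sum>j\<in>UNIV. app v (\<lambda>z. \<Sum>m\<in>UNIV. levi i j m * (z$j * pd m G z)) y)"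
    unfolding rdG by (rule app_sum3[OF U sF y])
  also have "\<dots> = (\<Sum>j\<in>UNIV. \<Sum>m\<in>UNIV. levi i j m * app v (\<lambda>z. z$j * pd m G z) y)"
    by (rule sum.cong[OF refl], subst app_sum3[OF U sm_cmult[OF U sH] y], rule sum.cong[OF refl], rule app_cmult[OF U sH y])
  also have "\<dots> = (\<Sum>j\<in>UNIV. \<Sum>m\<in>UNIV. levi i j m *
      (y$j * app (v @ [P m] @ Rb) f y + (\<Sum>v''\<leftarrow>delP j v. app (v'' @ [P m] @ Rb) f y)))"
  proof -
    have aw: "app (w @ [P m] @ Rb) f = app w (pd m G)" for w m by (simp add: app_append G_def)
    show ?thesis unfolding aw by (simp add: LeibP[OF U sm_pd[OF G] v y])
  qed
  finally show ?thesis .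
qed

lemma crit_lv:
  assumes U: "open U" and f: "smooth_on U f" and v: "\<forall>x\<in>set v. isP x" and y: "y \<in> U"
  shows "y$l * app (v @ Rb @ [P k]) f y - y$k * app (u @ Rb) f y
   = y$l * (app (v @ Rb @ [P k]) f y - app (v @ [P k] @ Rb) f y) + y$k * (app (v @ [P l] @ Rb) f y - app (u @ Rb) f y)
   + (\<Sum>i\<in>UNIV. levi i l k * (app (v @ [R i] @ Rb) f y - (\<Sum>j\<in>UNIV. \<Sum>m\<in>UNIV. levi i j m * (\<Sum>v''\<leftarrow>delP j v. app (v'' @ [P m] @ Rb) f y))))"
proof -
  define W where "W m = app (v @ [P m] @ Rb) f y" for m
  define Z where "Z j m = (\<Sum>v''\<leftarrow>delP j v. app (v'' @ [P m] @ Rb) f y)" for j m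
  have "(\<Sum>i\<in>UNIV. levi i l k * (app (v @ [R i] @ Rb) f y - (\<Sum>j\<in>UNIV. \<Sum>m\<in>UNIV. levi i j m * Z j m)))
      = (\<Sum>i\<in>UNIV. levi i l k * (\<Sum>j\<in>UNIV. \<Sum>m\<in>UNIV. levi i j m * y$j * W m))"
    unfolding expandR[OF U f v y] W_def Z_def
    by (simp add: sum_3 algebra_simps)
  also have "\<dots> = y$l * W k - y$k * W l" by (rule levi_id)
  finally show ?thesis unfolding Z_def W_def by (simp add: algebra_simps)
qed

definition "Hct \<beta> k l v f y = (\<Sum>i\<in>UNIV. levi i l k * (app (v @ [R i] @ Rw \<beta>) f y
   - (\<Sum>j\<in>UNIV. \<Sum>m\<in>UNIV. levi i j m * (\<Sum>v''\<leftarrow>delP j v. app (v'' @ [P m] @ Rw \<beta>) f y))))"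

definition "E1t \<alpha> \<beta> k f y = app (Pw \<alpha> @ Rw \<beta> @ [P k]) f y - app ([P k] @ Pw \<alpha> @ Rw \<beta>) f y"

definition "E2t B \<iota> \<alpha> \<beta> k M f y =
   -2*B * (\<Sum>l\<in>UNIV. \<Sum>v\<leftarrow>delP l (Pw \<alpha>). y$l * (app (v @ Rw \<beta> @ [P k]) f y - app (v @ [P k] @ Rw \<beta>) f y)
                   + y$k * (app (v @ [P l] @ Rw \<beta>) f y - app (Pw \<alpha> @ Rw \<beta>) f y))
   + (-2*B*(\<iota>+1)) * (\<Sum>l\<in>UNIV. y$l * evw (pre (Pw \<alpha>) (M l)) f y)"

definition "E3t B \<iota> \<alpha> \<beta> k M f y =
   -2*B * (\<Sum>l\<in>UNIV. \<Sum>v\<leftarrow>delP l (Pw \<alpha>). Hct \<beta> k l v f y)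
   - B * (\<Sum>l\<in>UNIV. \<Sum>v\<leftarrow>delP l (Pw \<alpha>). \<Sum>v'\<leftarrow>delP l v. app (v' @ Rw \<beta> @ [P k]) f y)
   + (-2*B*(\<iota>+1)) * (\<Sum>v\<leftarrow>delP k (Pw \<alpha>). app (v @ Rw \<beta>) f y)
   + (-2*B*(\<iota>+1)) * (\<Sum>l\<in>UNIV. \<Sum>v\<leftarrow>delP l (Pw \<alpha>). evw (pre v (M l)) f y)"

lemma cP_Pw: "cP (Pw a) = a" and cR_Pw: "cR (Pw a) = (\<lambda>_. 0)"
  and cP_Rw: "cP (Rw b) = (\<lambda>_. 0)" and cR_Rw: "cR (Rw b) = b"
proof -
  have e1: "cw a (\<lambda>_. 0) = Pw a" by (simp add: cw_def Rw_def)
  have e2: "cw (\<lambda>_. 0) b = Rw b" by (simp add: cw_def Pw_def)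
  show "cP (Pw a) = a" "cR (Pw a) = (\<lambda>_. 0)" using cw_counts(3,4)[of a "\<lambda>_. 0"] e1 by simp_all
  show "cP (Rw b) = (\<lambda>_. 0)" "cR (Rw b) = b" using cw_counts(3,4)[of "\<lambda>_. 0" b] e2 by simp_all
qed

lemma nP_Pw: "nP (Pw a) = mlen a" "nR (Pw a) = 0" using allP_counts[OF Pw_allP] len_Pw by auto
lemma nP_Rw: "nP (Rw b) = 0" "nR (Rw b) = mlen b" using allR_counts[OF Rw_allR] len_Rw by auto

lemma sum_len_delP: "(\<Sum>l\<in>UNIV. real (length (delP l (Pw a)))) = real (mlen a)"
  by (simp add: len_delP cP_Pw mlen_def)

lemma decomp_eq:
  fixes \<iota> A B :: real and \<alpha> \<beta> :: "3 \<Rightarrow> nat" and M :: "3 \<Rightarrow> (real \<times> op list) list"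
  assumes U: "open U" and f: "smooth_on U f" and y: "y \<in> U" and pos: "\<And>z. z \<in> U \<Longrightarrow> sig A B z > 0"
    and M: "\<And>W z. smooth_on U W \<Longrightarrow> z \<in> U \<Longrightarrow> app (Rw \<beta>) (\<lambda>z. z$k * W z) z = z$k * app (Rw \<beta>) W z + (\<Sum>l\<in>UNIV. z$l * evw (M l) W z)"
  shows "dpow \<alpha> (rpow \<beta> (\<lambda>z. sig A B z powr (-\<iota>) * pd k (\<lambda>w. sig A B w powr (\<iota>+1) * f w) z)) y
     - sig A B y powr (-\<iota> - real (mlen \<alpha>)) * pd k (\<lambda>w. sig A B w powr (\<iota> + real (mlen \<alpha>) + 1) * dpow \<alpha> (rpow \<beta> f) w) y
     = sig A B y * E1t \<alpha> \<beta> k f y + E2t B \<iota> \<alpha> \<beta> k M f y + E3t B \<iota> \<alpha> \<beta> k M f y"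
proof -
  define u where "u = Pw \<alpha>"
  define Rb where "Rb = Rw \<beta>"
  define \<sigma> where "\<sigma> = sig A B"
  define a where "a = real (mlen \<alpha>)"
  define c0 where "c0 = -2*B*(\<iota>+1)"
  define G where "G = app Rb f"
  define g where "g = app (u @ Rb) f"
  define X where "X = app (Rb @ [P k]) f"
  define Q where "Q l = evw (M l) f" for l
  have uP: "\<forall>x\<in>set u. isP x" unfolding u_def by (rule Pw_allP)
  have RbR: "\<forall>x\<in>set Rb. \<not> isP x" unfolding Rb_def by (rule Rw_allR)
  have sG: "smooth_on U G" unfolding G_def by (rule sm_app[OF U f])
  have sg: "smooth_on U g" unfolding g_def by (rule sm_app[OF U f])
  have sX: "smooth_on U X" unfolding X_def by (rule sm_app[OF U f])
  have sQ: "smooth_on U (Q l)" for l unfolding Q_def by (rule sm_evw[OF U f])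
  have ssig: "smooth_on U \<sigma>" unfolding \<sigma>_def by (rule sm_sig[OF U])
  define \<Psi> where "\<Psi> z = \<sigma> z * pd k f z + c0 * (z$k * f z)" for z
  have dpw: "dpow \<alpha> (rpow \<beta> h) = app u (app Rb h)" for h by (simp add: u_def Rb_def app_Pw app_Rw)
  have s1: "app Rb (\<lambda>z. \<sigma> z powr (-\<iota>) * pd k (\<lambda>w. \<sigma> w powr (\<iota>+1) * f w) z) z = app Rb \<Psi> z" if "z \<in> U" for z
  proof (rule app_local[OF U _ that])
    fix z assume zU: "z \<in> U"
    show "\<sigma> z powr (-\<iota>) * pd k (\<lambda>w. \<sigma> w powr (\<iota>+1) * f w) z = \<Psi> z"
      using E0[OF U f zU pos[OF zU], of \<iota> k] unfolding \<Psi>_def c0_def \<sigma>_def by (simp add: algebra_simps)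
  qed
  have s2: "app Rb \<Psi> z = \<sigma> z * X z + c0 * (z$k * G z + (\<Sum>l\<in>UNIV. z$l * Q l z))" if z: "z \<in> U" for z
  proof -
    have a1: "smooth_on U (\<lambda>z. \<sigma> z * pd k f z)" by (rule sm_mult[OF U ssig sm_pd[OF f]])
    have a2: "smooth_on U (\<lambda>z. z$k * f z)" by (rule sm_mult[OF U sm_coord f])
    have "app Rb \<Psi> z = app Rb (\<lambda>z. \<sigma> z * pd k f z) z + c0 * app Rb (\<lambda>z. z$k * f z) z"
      unfolding \<Psi>_def[abs_def] using app_add[OF U a1 sm_cmult[OF U a2] z] app_cmult[OF U a2 z] by simp
    also have "app Rb (\<lambda>z. \<sigma> z * pd k f z) z = \<sigma> z * X z"
      unfolding \<sigma>_def X_def using Rsig[OF U sm_pd[OF f] RbR z] by (simp add: app_append)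
    also have "app Rb (\<lambda>z. z$k * f z) z = z$k * G z + (\<Sum>l\<in>UNIV. z$l * Q l z)"
      unfolding G_def Q_def Rb_def by (rule M[OF f z])
    finally show ?thesis .
  qed
  have LHS1: "dpow \<alpha> (rpow \<beta> (\<lambda>z. \<sigma> z powr (-\<iota>) * pd k (\<lambda>w. \<sigma> w powr (\<iota>+1) * f w) z)) y
      = app u (\<lambda>z. \<sigma> z * X z + c0 * (z$k * G z + (\<Sum>l\<in>UNIV. z$l * Q l z))) y"
    unfolding dpw by (rule app_local[OF U _ y]) (simp add: s1 s2)
  have sYG: "smooth_on U (\<lambda>z. z$k * G z)" by (rule sm_mult[OF U sm_coord sG])
  have sYQ: "smooth_on U (\<lambda>z. z$l * Q l z)" for l by (rule sm_mult[OF U sm_coord sQ])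
  have sYQs: "smooth_on U (\<lambda>z. \<Sum>l\<in>UNIV. z$l * Q l z)" by (rule sm_sum[OF U finite_class.finite_UNIV sYQ])
  have sSX: "smooth_on U (\<lambda>z. \<sigma> z * X z)" by (rule sm_mult[OF U ssig sX])
  have LHS2: "app u (\<lambda>z. \<sigma> z * X z + c0 * (z$k * G z + (\<Sum>l\<in>UNIV. z$l * Q l z))) y
     = app u (\<lambda>z. \<sigma> z * X z) y + c0 * app u (\<lambda>z. z$k * G z) y + c0 * (\<Sum>l\<in>UNIV. app u (\<lambda>z. z$l * Q l z) y)"
  proof -
    have "app u (\<lambda>z. \<sigma> z * X z + c0 * (z$k * G z + (\<Sum>l\<in>UNIV. z$l * Q l z))) y
       = app u (\<lambda>z. \<sigma> z * X z) y + c0 * app u (\<lambda>z. z$k * G z + (\<Sum>l\<in>UNIV. z$l * Q l z)) y"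
      using app_add[OF U sSX sm_cmult[OF U sm_add[OF U sYG sYQs]] y] app_cmult[OF U sm_add[OF U sYG sYQs] y] by simp
    also have "app u (\<lambda>z. z$k * G z + (\<Sum>l\<in>UNIV. z$l * Q l z)) y = app u (\<lambda>z. z$k * G z) y + (\<Sum>l\<in>UNIV. app u (\<lambda>z. z$l * Q l z) y)"
      using app_add[OF U sYG sYQs y] app_sum3[OF U sYQ y] by simp
    finally show ?thesis by (simp add: algebra_simps)
  qed
  have L1: "app u (\<lambda>z. \<sigma> z * X z) y = \<sigma> y * app u X y - 2 * B * (\<Sum>l\<in>UNIV. y$l * (\<Sum>v\<leftarrow>delP l u. app v X y))
     - B * (\<Sum>l\<in>UNIV. \<Sum>v\<leftarrow>delP l u. \<Sum>v'\<leftarrow>delP l v. app v' X y)"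
    unfolding \<sigma>_def by (rule Lsig[OF U sX uP y])
  have L2: "app u (\<lambda>z. z$k * G z) y = y$k * g y + (\<Sum>v\<leftarrow>delP k u. app v G y)"
    using LeibP[OF U sG uP y] by (simp add: g_def G_def app_append)
  have L3: "app u (\<lambda>z. z$l * Q l z) y = y$l * evw (pre u (M l)) f y + (\<Sum>v\<leftarrow>delP l u. evw (pre v (M l)) f y)" for l
  proof -
    have "app u (\<lambda>z. z$l * Q l z) y = y$l * app u (Q l) y + (\<Sum>v\<leftarrow>delP l u. app v (Q l) y)"
      by (rule LeibP[OF U sQ uP y])
    thus ?thesis unfolding Q_def using app_evw[OF U f y] by simp
  qed
  have T: "\<sigma> y powr (-\<iota> - a) * pd k (\<lambda>w. \<sigma> w powr (\<iota> + a + 1) * g w) y = \<sigma> y * pd k g y - 2 * B * (\<iota> + a + 1) * y$k * g y"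
    using E0[OF U sg y pos[OF y], of "\<iota> + a" k] unfolding \<sigma>_def by (simp add: algebra_simps)
  have crit: "(\<Sum>l\<in>UNIV. y$l * (\<Sum>v\<leftarrow>delP l u. app v X y)) - a * (y$k * g y)
      = (\<Sum>l\<in>UNIV. \<Sum>v\<leftarrow>delP l u. y$l * app (v @ Rb @ [P k]) f y - y$k * app (u @ Rb) f y)"
  proof -
    have "a * (y$k * g y) = (\<Sum>l\<in>UNIV. \<Sum>v\<leftarrow>delP l u. y$k * g y)"
      unfolding a_def u_def sum_len_delP[symmetric] by (simp add: sum_list_triv sum_distrib_right)
    thus ?thesis by (simp add: sum_list_const_mult sum_list_subtractf sum_subtractf[symmetric] X_def g_def app_append)
  qed
  have crit2: "y$l * app (v @ Rb @ [P k]) f y - y$k * app (u @ Rb) f y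
     = y$l * (app (v @ Rb @ [P k]) f y - app (v @ [P k] @ Rb) f y) + y$k * (app (v @ [P l] @ Rb) f y - app (u @ Rb) f y)
       + Hct \<beta> k l v f y" if "v \<in> set (delP l u)" for l v
    unfolding Hct_def Rb_def[symmetric] by (rule crit_lv[OF U f _ y]) (use delP_props[OF uP that] in blast)
  have critF: "(\<Sum>l\<in>UNIV. y$l * (\<Sum>v\<leftarrow>delP l u. app v X y)) - a * (y$k * g y)
     = (\<Sum>l\<in>UNIV. \<Sum>v\<leftarrow>delP l u. y$l * (app (v @ Rb @ [P k]) f y - app (v @ [P k] @ Rb) f y) + y$k * (app (v @ [P l] @ Rb) f y - app (u @ Rb) f y))
       + (\<Sum>l\<in>UNIV. \<Sum>v\<leftarrow>delP l u. Hct \<beta> k l v f y)"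
    unfolding crit sum.distrib[symmetric] sum_list_addf[symmetric]
    by (intro sum.cong refl arg_cong[of _ _ sum_list] map_cong) (simp add: crit2)
  have pdg: "pd k g y = app ([P k] @ u @ Rb) f y" by (simp add: g_def app_append)
  define SX where "SX = (\<Sum>l\<in>UNIV. y$l * (\<Sum>v\<leftarrow>delP l u. app v X y))"
  define S3 where "S3 = (\<Sum>l\<in>UNIV. \<Sum>v\<leftarrow>delP l u. \<Sum>v'\<leftarrow>delP l v. app v' X y)"
  define SG where "SG = (\<Sum>v\<leftarrow>delP k u. app v G y)"
  define SQ1 where "SQ1 = (\<Sum>l\<in>UNIV. y$l * evw (pre u (M l)) f y)"
  define SQ2 where "SQ2 = (\<Sum>l\<in>UNIV. \<Sum>v\<leftarrow>delP l u. evw (pre v (M l)) f y)"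
  define DD where "DD = (\<Sum>l\<in>UNIV. \<Sum>v\<leftarrow>delP l u. y$l * (app (v @ Rb @ [P k]) f y - app (v @ [P k] @ Rb) f y) + y$k * (app (v @ [P l] @ Rb) f y - app (u @ Rb) f y))"
  define HH where "HH = (\<Sum>l\<in>UNIV. \<Sum>v\<leftarrow>delP l u. Hct \<beta> k l v f y)"
  have eL: "dpow \<alpha> (rpow \<beta> (\<lambda>z. sig A B z powr (-\<iota>) * pd k (\<lambda>w. sig A B w powr (\<iota>+1) * f w) z)) y
      = \<sigma> y * app u X y - 2*B*SX - B*S3 + c0 * (y$k * g y + SG) + c0 * (SQ1 + SQ2)"
  proof -
    have "(\<Sum>l\<in>UNIV. app u (\<lambda>z. z$l * Q l z) y) = SQ1 + SQ2"
      unfolding L3 SQ1_def SQ2_def by (simp add: sum.distrib)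
    thus ?thesis using LHS1[unfolded \<sigma>_def] LHS2 L1 L2 unfolding SX_def S3_def SG_def
      by (simp add: \<sigma>_def)
  qed
  have eT: "sig A B y powr (-\<iota> - real (mlen \<alpha>)) * pd k (\<lambda>w. sig A B w powr (\<iota> + real (mlen \<alpha>) + 1) * dpow \<alpha> (rpow \<beta> f) w) y
      = \<sigma> y * pd k g y - 2 * B * (\<iota> + a + 1) * y$k * g y"
  proof -
    have "dpow \<alpha> (rpow \<beta> f) = g" unfolding dpw g_def by (simp add: app_append)
    thus ?thesis using T unfolding \<sigma>_def a_def by simp
  qed
  have eC: "SX = DD + HH + a * (y$k * g y)" using critF unfolding SX_def DD_def HH_def by simp
  have e1: "E1t \<alpha> \<beta> k f y = app u X y - pd k g y"
    unfolding E1t_def pdg X_def u_def Rb_def by (simp add: app_append)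
  have e2: "E2t B \<iota> \<alpha> \<beta> k M f y = -2*B*DD + c0 * SQ1"
    unfolding E2t_def DD_def SQ1_def u_def Rb_def c0_def by simp
  have e3: "E3t B \<iota> \<alpha> \<beta> k M f y = -2*B*HH - B*S3 + c0*SG + c0*SQ2"
    unfolding E3t_def HH_def S3_def SG_def SQ2_def u_def Rb_def c0_def X_def G_def by (simp add: app_append)
  show ?thesis unfolding eL eT e1 e2 e3 eC c0_def by (simp add: \<sigma>_def algebra_simps)
qed

declare cP_Cons[simp] cR_Cons[simp]

lemma counts_PP: "cP [P k] = (\<lambda>m. if m = k then 1 else 0)" "cR [P k] = (\<lambda>m. 0)" "nP [P k] = 1" "nR [P k] = 0"
  by (auto simp: cP_def cR_def nP_def nR_def fun_eq_iff)
lemma counts_RR: "cP [R i] = (\<lambda>m. 0)" "nP [R i] = 0" "nR [R i] = 1"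
  by (auto simp: cP_def nP_def nR_def fun_eq_iff)

lemma delP_Pw: "v \<in> set (delP l (Pw a)) \<Longrightarrow> (\<forall>x\<in>set v. isP x) \<and> nP v = mlen a - 1 \<and> nR v = 0 \<and> mlen a \<ge> 1
   \<and> cP (Pw a) = (\<lambda>m. cP v m + (if m = l then 1 else 0)) \<and> cR v = (\<lambda>_. 0)"
  using delP_props[OF Pw_allP, of v l a] allP_counts[of v] len_Pw[of a] cR_Pw[of a] by auto

lemma delP_v: "\<forall>x\<in>set v. isP x \<Longrightarrow> v'' \<in> set (delP j v) \<Longrightarrow> nP v'' + 1 = nP v \<and> nR v'' = 0"
  using delP_props[of v v'' j] allP_counts[of v] allP_counts[of v''] by auto

lemma B1: "open U \<Longrightarrow> Bnd U (mlen \<alpha> + 1) (mlen \<beta>) (E1t \<alpha> \<beta> k)"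
  unfolding E1t_def[abs_def]
  by (rule wdiff_Bnd) (auto simp: cP_Pw cR_Pw cP_Rw cR_Rw nP_Pw nP_Rw counts_PP fun_eq_iff)

lemma B2:
  assumes U: "open U" and bd: "\<And>y l. y \<in> U \<Longrightarrow> \<bar>y$l\<bar> \<le> Rad"
    and M: "\<forall>l. \<forall>(c,w)\<in>set (M l). (\<forall>x\<in>set w. \<not> isP x) \<and> length w < length (Rw \<beta>)"
  shows "Bnd U (mlen \<alpha>) (mlen \<beta>) (E2t B \<iota> \<alpha> \<beta> k M)"
proof -
  have D: "Bnd U (mlen \<alpha>) (mlen \<beta>) (\<lambda>f y. y$l * (app (v @ Rw \<beta> @ [P k]) f y - app (v @ [P k] @ Rw \<beta>) f y)
                   + y$k * (app (v @ [P l] @ Rw \<beta>) f y - app (Pw \<alpha> @ Rw \<beta>) f y))"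
    if v: "v \<in> set (delP l (Pw \<alpha>))" for l v
  proof -
    note dv = delP_Pw[OF v]
    have 1: "Bnd U (mlen \<alpha>) (mlen \<beta>) (\<lambda>f y. app (v @ Rw \<beta> @ [P k]) f y - app (v @ [P k] @ Rw \<beta>) f y)"
      by (rule wdiff_Bnd[OF U]) (use dv in \<open>auto simp: cP_Rw cR_Rw nP_Rw counts_PP fun_eq_iff\<close>)
    have 2: "Bnd U (mlen \<alpha>) (mlen \<beta>) (\<lambda>f y. app (v @ [P l] @ Rw \<beta>) f y - app (Pw \<alpha> @ Rw \<beta>) f y)"
      by (rule wdiff_Bnd[OF U]) (use dv in \<open>auto simp: cP_Rw cR_Rw nP_Rw counts_PP fun_eq_iff cR_Pw\<close>)
    show ?thesis by (rule Bnd_add[OF Bnd_coef[OF 1 bd] Bnd_coef[OF 2 bd]])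
  qed
  have E: "Bnd U (mlen \<alpha>) (mlen \<beta>) (\<lambda>f y. y$l * evw (pre (Pw \<alpha>) (M l)) f y)" for l
  proof (rule Bnd_coef[OF _ bd])
    show "Bnd U (mlen \<alpha>) (mlen \<beta>) (\<lambda>f. evw (pre (Pw \<alpha>) (M l)) f)"
    proof (rule evw_Bnd[OF U])
      show "\<forall>(c, v)\<in>set (pre (Pw \<alpha>) (M l)). nP v = mlen \<alpha> \<and> nR v < mlen \<beta>"
        using M unfolding pre_def by (fastforce simp: nP_Pw allR_counts len_Rw)
    qed
  qed
  show ?thesis unfolding E2t_def[abs_def]
    by (intro Bnd_add Bnd_cmult Bnd_sum3 Bnd_sum_list D E)
qed

lemma BndA_diff: "BndA U n p r F \<Longrightarrow> BndA U n p r H \<Longrightarrow> BndA U n p r (\<lambda>f y. F f y - H f y)"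
  using BndA_add[of U n p r F "\<lambda>f y. (-1) * H f y"] BndA_cmult[of U n p r H "-1"] by simp

lemma B3:
  assumes U: "open U"
    and M: "\<forall>l. \<forall>(c,w)\<in>set (M l). (\<forall>x\<in>set w. \<not> isP x) \<and> length w < length (Rw \<beta>)"
  shows "BndA U (mlen \<alpha>) (mlen \<alpha> - 1) (mlen \<beta> + 2) (E3t B \<iota> \<alpha> \<beta> k M)"
proof -
  let ?p = "mlen \<alpha> - 1" and ?r = "mlen \<beta> + 2"
  have ne: "delP l (Pw \<alpha>) \<noteq> [] \<Longrightarrow> mlen \<alpha> \<ge> 1" for l
    using delP_Pw[of _ l \<alpha>] by (cases "delP l (Pw \<alpha>)") auto
  have H: "Bnd U ?p ?r (Hct \<beta> k l v)" if v: "v \<in> set (delP l (Pw \<alpha>))" for l v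
  proof -
    note dv = delP_Pw[OF v]
    have w1: "Bnd U ?p ?r (app (v @ [R i] @ Rw \<beta>))" for i
      by (rule word_Bnd[OF U]) (use dv in \<open>auto simp: nP_Rw counts_RR\<close>)
    have w2: "Bnd U ?p ?r (app (v'' @ [P m] @ Rw \<beta>))" if "v'' \<in> set (delP j v)" for j m v''
      by (rule word_Bnd[OF U]) (use dv delP_v[OF _ that] in \<open>auto simp: nP_Rw counts_PP\<close>)
    show ?thesis unfolding Hct_def[abs_def]
      by (intro Bnd_sum3 Bnd_cmult Bnd_diff w1 Bnd_sum_list w2)
  qed
  have S3: "Bnd U ?p ?r (\<lambda>f y. \<Sum>v'\<leftarrow>delP l v. app (v' @ Rw \<beta> @ [P k]) f y)" if v: "v \<in> set (delP l (Pw \<alpha>))" for l v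
  proof (rule Bnd_sum_list)
    fix v' assume v': "v' \<in> set (delP l v)"
    show "Bnd U ?p ?r (app (v' @ Rw \<beta> @ [P k]))"
      by (rule word_Bnd[OF U]) (use delP_Pw[OF v] delP_v[OF _ v'] in \<open>auto simp: nP_Rw counts_PP\<close>)
  qed
  have SG: "Bnd U ?p ?r (app (v @ Rw \<beta>))" if v: "v \<in> set (delP l (Pw \<alpha>))" for l v
    by (rule word_Bnd[OF U]) (use delP_Pw[OF v] in \<open>auto simp: nP_Rw\<close>)
  have SQ: "Bnd U ?p ?r (evw (pre v (M l)))" if v: "v \<in> set (delP l (Pw \<alpha>))" for l v
  proof (rule evw_Bnd[OF U])
    show "\<forall>(c, w)\<in>set (pre v (M l)). nP w = ?p \<and> nR w < ?r"
      using M delP_Pw[OF v] unfolding pre_def by (fastforce simp: allR_counts len_Rw)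
  qed
  have A1: "BndA U (mlen \<alpha>) ?p ?r (\<lambda>f y. \<Sum>l\<in>UNIV. \<Sum>v\<leftarrow>delP l (Pw \<alpha>). Hct \<beta> k l v f y)"
    by (intro BndA_sum3 BndA_list H ne)
  have A2: "BndA U (mlen \<alpha>) ?p ?r (\<lambda>f y. \<Sum>l\<in>UNIV. \<Sum>v\<leftarrow>delP l (Pw \<alpha>). \<Sum>v'\<leftarrow>delP l v. app (v' @ Rw \<beta> @ [P k]) f y)"
    by (intro BndA_sum3 BndA_list S3 ne)
  have A3: "BndA U (mlen \<alpha>) ?p ?r (\<lambda>f y. \<Sum>v\<leftarrow>delP k (Pw \<alpha>). app (v @ Rw \<beta>) f y)"
    by (intro BndA_list SG ne)
  have A4: "BndA U (mlen \<alpha>) ?p ?r (\<lambda>f y. \<Sum>l\<in>UNIV. \<Sum>v\<leftarrow>delP l (Pw \<alpha>). evw (pre v (M l)) f y)"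
    by (intro BndA_sum3 BndA_list SQ ne)
  show ?thesis unfolding E3t_def[abs_def]
    by (intro BndA_add BndA_diff BndA_cmult A1 A2 A3 A4)
qed

lemma perk:
  fixes \<iota> A B :: real and \<alpha> \<beta> :: "3 \<Rightarrow> nat" and k :: 3
  assumes "A > 0" and "B > 0"
  shows "\<exists>C\<ge>0. \<forall>f. smooth_on (ball 0 (sqrt (A / B))) f \<longrightarrow>
           (\<forall>y\<in>ball 0 (sqrt (A / B)).
             \<bar>dpow \<alpha> (rpow \<beta> (\<lambda>z. sig A B z powr (-\<iota>) *
                  pd k (\<lambda>w. sig A B w powr (\<iota> + 1) * f w) z)) y
              - sig A B y powr (-\<iota> - real (mlen \<alpha>)) *
                  pd k (\<lambda>w. sig A B w powr (\<iota> + real (mlen \<alpha>) + 1) * dpow \<alpha> (rpow \<beta> f) w) y\<bar>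
             \<le> C * (\<Sum>j<mlen \<beta>. sig A B y * absD (mlen \<alpha> + 1) j f y + absD (mlen \<alpha>) j f y)
               + C * real (mlen \<alpha>) * (\<Sum>j\<le>mlen \<beta> + 1. absD (mlen \<alpha> - 1) j f y))"
proof -
  define U where "U = ball (0::real^3) (sqrt (A / B))"
  have U: "open U" unfolding U_def by simp
  have pos: "sig A B z > 0" if "z \<in> U" for z using sig_pos[OF assms] that unfolding U_def by blast
  have bd: "\<bar>y$l\<bar> \<le> sqrt (A / B)" if "y \<in> U" for y l
  proof -
    have "\<bar>y$l\<bar> \<le> norm y" by (rule component_le_norm_cart)
    also have "\<dots> \<le> sqrt (A / B)" using that unfolding U_def by simp
    finally show ?thesis .
  qed
  obtain M where M: "\<forall>l. \<forall>(c,w)\<in>set (M l). (\<forall>x\<in>set w. \<not> isP x) \<and> length w < length (Rw \<beta>)"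
    and Meq: "\<And>W z. smooth_on U W \<Longrightarrow> z \<in> U \<Longrightarrow> app (Rw \<beta>) (\<lambda>z. z$k * W z) z = z$k * app (Rw \<beta>) W z + (\<Sum>l\<in>UNIV. z$l * evw (M l) W z)"
    using RY[OF U Rw_allR, where k=k] by blast
  obtain K1 where K1: "\<And>f y. smooth_on U f \<Longrightarrow> y \<in> U \<Longrightarrow> \<bar>E1t \<alpha> \<beta> k f y\<bar> \<le> K1 * Sm (mlen \<alpha> + 1) (mlen \<beta>) f y"
    using B1[OF U, of \<alpha> \<beta> k] unfolding Bnd_def by blast
  obtain K2 where K2: "\<And>f y. smooth_on U f \<Longrightarrow> y \<in> U \<Longrightarrow> \<bar>E2t B \<iota> \<alpha> \<beta> k M f y\<bar> \<le> K2 * Sm (mlen \<alpha>) (mlen \<beta>) f y"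
    using B2[OF U bd M, of \<alpha> B \<iota> k] unfolding Bnd_def by blast
  obtain K3 where K3: "\<And>f y. smooth_on U f \<Longrightarrow> y \<in> U \<Longrightarrow> \<bar>E3t B \<iota> \<alpha> \<beta> k M f y\<bar> \<le> K3 * real (mlen \<alpha>) * Sm (mlen \<alpha> - 1) (mlen \<beta> + 2) f y"
    using B3[OF U M, of \<alpha> B \<iota> k] unfolding BndA_def by blast
  define C where "C = \<bar>K1\<bar> + \<bar>K2\<bar> + \<bar>K3\<bar>"
  have C0: "C \<ge> 0" unfolding C_def by simp
  show ?thesis unfolding U_def[symmetric]
  proof (intro exI[of _ C] conjI[OF C0] allI impI ballI)
    fix f y assume f: "smooth_on U f" and y: "y \<in> U"
    let ?S1 = "Sm (mlen \<alpha> + 1) (mlen \<beta>) f y" and ?S2 = "Sm (mlen \<alpha>) (mlen \<beta>) f y"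
      and ?S3 = "Sm (mlen \<alpha> - 1) (mlen \<beta> + 2) f y"
    have sp: "sig A B y > 0" by (rule pos[OF y])
    have n1: "?S1 \<ge> 0" "?S2 \<ge> 0" "?S3 \<ge> 0" by (simp_all add: Sm_nonneg)
    have eq: "dpow \<alpha> (rpow \<beta> (\<lambda>z. sig A B z powr (-\<iota>) * pd k (\<lambda>w. sig A B w powr (\<iota>+1) * f w) z)) y
     - sig A B y powr (-\<iota> - real (mlen \<alpha>)) * pd k (\<lambda>w. sig A B w powr (\<iota> + real (mlen \<alpha>) + 1) * dpow \<alpha> (rpow \<beta> f) w) y
     = sig A B y * E1t \<alpha> \<beta> k f y + E2t B \<iota> \<alpha> \<beta> k M f y + E3t B \<iota> \<alpha> \<beta> k M f y"
      by (rule decomp_eq[OF U f y pos Meq])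
    have b1: "sig A B y * \<bar>E1t \<alpha> \<beta> k f y\<bar> \<le> sig A B y * (C * ?S1)"
    proof (rule mult_left_mono)
      have "\<bar>E1t \<alpha> \<beta> k f y\<bar> \<le> K1 * ?S1" by (rule K1[OF f y])
      also have "\<dots> \<le> C * ?S1" by (rule mult_right_mono) (use n1 in \<open>auto simp: C_def\<close>)
      finally show "\<bar>E1t \<alpha> \<beta> k f y\<bar> \<le> C * ?S1" .
    qed (use sp in simp)
    have b2: "\<bar>E2t B \<iota> \<alpha> \<beta> k M f y\<bar> \<le> C * ?S2"
    proof -
      have "\<bar>E2t B \<iota> \<alpha> \<beta> k M f y\<bar> \<le> K2 * ?S2" by (rule K2[OF f y])
      also have "\<dots> \<le> C * ?S2" by (rule mult_right_mono) (use n1 in \<open>auto simp: C_def\<close>)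
      finally show ?thesis .
    qed
    have b3: "\<bar>E3t B \<iota> \<alpha> \<beta> k M f y\<bar> \<le> C * real (mlen \<alpha>) * ?S3"
    proof -
      have "\<bar>E3t B \<iota> \<alpha> \<beta> k M f y\<bar> \<le> K3 * (real (mlen \<alpha>) * ?S3)" using K3[OF f y] by (simp add: mult.assoc)
      also have "\<dots> \<le> C * (real (mlen \<alpha>) * ?S3)" by (rule mult_right_mono) (use n1 in \<open>auto simp: C_def\<close>)
      finally show ?thesis by (simp add: mult.assoc)
    qed
    have r1: "(\<Sum>j<mlen \<beta>. sig A B y * absD (mlen \<alpha> + 1) j f y + absD (mlen \<alpha>) j f y) = sig A B y * ?S1 + ?S2"
      by (simp add: Sm_def sum.distrib sum_distrib_left)
    have r2: "(\<Sum>j\<le>mlen \<beta> + 1. absD (mlen \<alpha> - 1) j f y) = ?S3"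
      unfolding Sm_def by (simp add: lessThan_Suc_atMost)
    have "\<bar>sig A B y * E1t \<alpha> \<beta> k f y + E2t B \<iota> \<alpha> \<beta> k M f y + E3t B \<iota> \<alpha> \<beta> k M f y\<bar>
       \<le> sig A B y * \<bar>E1t \<alpha> \<beta> k f y\<bar> + \<bar>E2t B \<iota> \<alpha> \<beta> k M f y\<bar> + \<bar>E3t B \<iota> \<alpha> \<beta> k M f y\<bar>"
    proof -
      have t: "\<bar>X + Y + Z\<bar> \<le> \<bar>X\<bar> + \<bar>Y\<bar> + \<bar>Z\<bar>" for X Y Z :: real by linarith
      show ?thesis using t[of "sig A B y * E1t \<alpha> \<beta> k f y"] sp by (simp add: abs_mult)
    qed
    also have "\<dots> \<le> sig A B y * (C * ?S1) + C * ?S2 + C * real (mlen \<alpha>) * ?S3"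
      using b1 b2 b3 by linarith
    finally show "\<bar>dpow \<alpha> (rpow \<beta> (\<lambda>z. sig A B z powr (-\<iota>) *
                  pd k (\<lambda>w. sig A B w powr (\<iota> + 1) * f w) z)) y
              - sig A B y powr (-\<iota> - real (mlen \<alpha>)) *
                  pd k (\<lambda>w. sig A B w powr (\<iota> + real (mlen \<alpha>) + 1) * dpow \<alpha> (rpow \<beta> f) w) y\<bar>
             \<le> C * (\<Sum>j<mlen \<beta>. sig A B y * absD (mlen \<alpha> + 1) j f y + absD (mlen \<alpha>) j f y)
               + C * real (mlen \<alpha>) * (\<Sum>j\<le>mlen \<beta> + 1. absD (mlen \<alpha> - 1) j f y)"
      unfolding eq r1 r2 by (simp add: algebra_simps)
  qed
qed

theorem mainTheorem8:
  fixes \<iota> A B :: real and \<alpha> \<beta> :: "3 \<Rightarrow> nat"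
  assumes "\<iota> > 0" and "A > 0" and "B > 0"
  shows "\<exists>C. \<forall>f k. smooth_on (ball 0 (sqrt (A / B))) f \<longrightarrow>
           (\<forall>y\<in>ball 0 (sqrt (A / B)).
             \<bar>dpow \<alpha> (rpow \<beta> (\<lambda>z. sig A B z powr (-\<iota>) *
                  pd k (\<lambda>w. sig A B w powr (\<iota> + 1) * f w) z)) y
              - sig A B y powr (-\<iota> - real (mlen \<alpha>)) *
                  pd k (\<lambda>w. sig A B w powr (\<iota> + real (mlen \<alpha>) + 1) * dpow \<alpha> (rpow \<beta> f) w) y\<bar>
             \<le> C * (\<Sum>j<mlen \<beta>. sig A B y * absD (mlen \<alpha> + 1) j f y + absD (mlen \<alpha>) j f y)
               + C * real (mlen \<alpha>) * (\<Sum>j\<le>mlen \<beta> + 1. absD (mlen \<alpha> - 1) j f y))"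
proof -
  define Q where "Q = (\<lambda>k C. \<forall>f. smooth_on (ball 0 (sqrt (A / B))) f \<longrightarrow>
           (\<forall>y\<in>ball 0 (sqrt (A / B)).
             \<bar>dpow \<alpha> (rpow \<beta> (\<lambda>z. sig A B z powr (-\<iota>) *
                  pd k (\<lambda>w. sig A B w powr (\<iota> + 1) * f w) z)) y
              - sig A B y powr (-\<iota> - real (mlen \<alpha>)) *
                  pd k (\<lambda>w. sig A B w powr (\<iota> + real (mlen \<alpha>) + 1) * dpow \<alpha> (rpow \<beta> f) w) y\<bar>
             \<le> C * (\<Sum>j<mlen \<beta>. sig A B y * absD (mlen \<alpha> + 1) j f y + absD (mlen \<alpha>) j f y)
               + C * real (mlen \<alpha>) * (\<Sum>j\<le>mlen \<beta> + 1. absD (mlen \<alpha> - 1) j f y)))"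
  have "\<forall>k. \<exists>C. C \<ge> 0 \<and> Q k C"
  proof
    fix k
    have "\<exists>C\<ge>0. Q k C" unfolding Q_def by (rule perk[OF assms(2,3)])
    then obtain C where "C \<ge> 0" "Q k C" by blast
    thus "\<exists>C. C \<ge> 0 \<and> Q k C" by (intro exI[of _ C]) simp
  qed
  then obtain Cf where Cf: "\<And>k. Cf k \<ge> 0" "\<And>k. Q k (Cf k)" by metis
  define C where "C = (\<Sum>k\<in>UNIV. Cf k)"
  have le: "Cf k \<le> C" for k unfolding C_def by (rule member_le_sum) (auto intro: Cf(1))
  show ?thesis
  proof (intro exI[of _ C] allI impI ballI)
    fix f k and y :: "real^3" assume f: "smooth_on (ball 0 (sqrt (A / B))) f" and y: "y \<in> ball 0 (sqrt (A / B))"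
    have sp: "sig A B y > 0" using sig_pos[OF assms(2,3) y] .
    have n1: "0 \<le> (\<Sum>j<mlen \<beta>. sig A B y * absD (mlen \<alpha> + 1) j f y + absD (mlen \<alpha>) j f y)"
      using sp by (intro sum_nonneg add_nonneg_nonneg mult_nonneg_nonneg absD_nonneg) auto
    have n2: "0 \<le> real (mlen \<alpha>) * (\<Sum>j\<le>mlen \<beta> + 1. absD (mlen \<alpha> - 1) j f y)"
      by (intro mult_nonneg_nonneg sum_nonneg absD_nonneg) auto
    have "Cf k * (\<Sum>j<mlen \<beta>. sig A B y * absD (mlen \<alpha> + 1) j f y + absD (mlen \<alpha>) j f y)
        \<le> C * (\<Sum>j<mlen \<beta>. sig A B y * absD (mlen \<alpha> + 1) j f y + absD (mlen \<alpha>) j f y)"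
      by (rule mult_right_mono[OF le n1])
    moreover have "Cf k * (real (mlen \<alpha>) * (\<Sum>j\<le>mlen \<beta> + 1. absD (mlen \<alpha> - 1) j f y))
        \<le> C * (real (mlen \<alpha>) * (\<Sum>j\<le>mlen \<beta> + 1. absD (mlen \<alpha> - 1) j f y))"
      by (rule mult_right_mono[OF le n2])
    ultimately show "\<bar>dpow \<alpha> (rpow \<beta> (\<lambda>z. sig A B z powr (-\<iota>) *
                  pd k (\<lambda>w. sig A B w powr (\<iota> + 1) * f w) z)) y
              - sig A B y powr (-\<iota> - real (mlen \<alpha>)) *
                  pd k (\<lambda>w. sig A B w powr (\<iota> + real (mlen \<alpha>) + 1) * dpow \<alpha> (rpow \<beta> f) w) y\<bar>
             \<le> C * (\<Sum>j<mlen \<beta>. sig A B y * absD (mlen \<alpha> + 1) j f y + absD (mlen \<alpha>) j f y)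
               + C * real (mlen \<alpha>) * (\<Sum>j\<le>mlen \<beta> + 1. absD (mlen \<alpha> - 1) j f y)"
      using Cf(2)[of k, unfolded Q_def, rule_format, OF f y] by (simp only: mult.assoc)
  qed
qed

end
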